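(* Let $\mathcal X$ be finite and let $\hat P_0,\hat P_1$ be distributions on $\mathcal X$ with full support. For a threshold $\hat\gamma$ with $-D(\hat P_0\|\hat P_1)\le\hat\gamma\le D(\hat P_1\|\hat P_0)$ let $\hat{\mathcal Q}_0=\{Q:D(Q\|\hat P_0)-D(Q\|\hat P_1)\ge\hat\gamma\}$, $\hat{\mathcal Q}_1=\{Q:D(Q\|\hat P_0)-D(Q\|\hat P_1)\le\hat\gamma\}$, and for $r_0,r_1\ge0$ define the worst-case error exponents of the mismatched likelihood ratio test $$\underline{\hat E}_0(r_0)=\min_{P_0\in\mathcal B(\hat P_0,r_0)}\min_{Q\in\hat{\mathcal Q}_0}D(Q\|P_0),\qquad \underline{\hat E}_1(r_1)=\min_{P_1\in\mathcal B(\hat P_1,r_1)}\min_{Q\in\hat{\mathcal Q}_1}D(Q\|P_1).$$ Let $\hat Q_\lambda(x)=\hat P_0^{1-\lambda}(x)\hat P_1^{\lambda}(x)/\sum_a\hat P_0^{1-\lambda}(a)\hat P_1^{\lambda}(a)$ with $\lambda\in[0,1]$ solving $D(\hat Q_\lambda\|\hat P_0)-D(\hat Q_\lambda\|\hat P_1)=\hat\gamma$, and let $E_0=D(\hat Q_\lambda\|\hat P_0)$, $E_1=D(\hat Q_\lambda\|\hat P_1)$ (the matched exponents). Then for $i\in\{0,1\}$, as $r_i\to0$, $$\underline{\hat E}_i(r_i)=E_i-\sqrt{r_i\,\theta_i(\hat P_0,\hat P_1,\hat\gamma)}+o(\sqrt{r_i}),\qquad \theta_i(\hat P_0,\hat P_1,\hat\gamma)=\frac{2}{\alpha}\mathrm{Var}_{\hat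 P_i}\Big(\frac{\hat Q_\lambda(X)}{\hat P_i(X)}\Big).$$
   Context: $D$ is relative entropy. The divergence ball is $\mathcal B(Q,r)=\{P\in\mathcal P(\mathcal X):d(Q,P)\le r\}$ where either (i) $d(Q,P)=D_\alpha(Q\|P)=\frac{1}{\alpha-1}\log\sum_x Q(x)^\alpha P(x)^{1-\alpha}$ is the Rényi divergence of order $\alpha>0$ ($\alpha=1$ meaning relative entropy), or (ii) $d(Q,P)=D_f(Q\|P)=\sum_xP(x)f(Q(x)/P(x))$ is an $f$-divergence with $f$ convex and twice differentiable, in which case $\alpha:=f''(1)$. The mismatched likelihood ratio test with test distributions $\hat P_0,\hat P_1$ decides hypothesis 1 iff $D(\hat T\|\hat P_0)-D(\hat T\|\hat P_1)\ge\hat\gamma$ for observation type $\hat T$, while observations are generated i.i.d. by the true $P_0$ or $P_1$; the inner minima above are its error exponents under true distribution $P_i$. *)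

theory Defs
  imports "HOL-Analysis.Analysis"
begin

definition pdists :: "('a::finite \<Rightarrow> real) set" where
  "pdists = {P. (\<forall>x. 0 \<le> P x) \<and> (\<Sum>x\<in>UNIV. P x) = 1}"

definition KL :: "('a::finite \<Rightarrow> real) \<Rightarrow> ('a \<Rightarrow> real) \<Rightarrow> ereal" where
  "KL Q P = (if \<exists>x. 0 < Q x \<and> P x = 0 then \<infinity>
             else ereal (\<Sum>x\<in>UNIV. if Q x = 0 then 0 else Q x * ln (Q x / P x)))"

definition renyi_div :: "real \<Rightarrow> ('a::finite \<Rightarrow> real) \<Rightarrow> ('a \<Rightarrow> real) \<Rightarrow> ereal" where
  "renyi_div \<alpha> Q P =
     (if \<alpha> = 1 then KL Q P
      else if 1 < \<alpha> \<and> (\<exists>x. 0 < Q x \<and> P x = 0) then \<infinity>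
      else (let s = (\<Sum>x\<in>UNIV. Q x powr \<alpha> * P x powr (1 - \<alpha>))
            in if s = 0 then \<infinity> else ereal (ln s / (\<alpha> - 1))))"

definition f_div :: "(real \<Rightarrow> real) \<Rightarrow> ('a::finite \<Rightarrow> real) \<Rightarrow> ('a \<Rightarrow> real) \<Rightarrow> ereal" where
  "f_div f Q P =
     (\<Sum>x\<in>UNIV. if P x = 0 then (if Q x = 0 then 0
                                 else ereal (Q x) * Lim at_top (\<lambda>t. ereal (f t / t)))
                else ereal (P x * f (Q x / P x)))"

definition div_ball ::
  "(('a::finite \<Rightarrow> real) \<Rightarrow> ('a \<Rightarrow> real) \<Rightarrow> ereal) \<Rightarrow> ('a \<Rightarrow> real) \<Rightarrow> real \<Rightarrow> ('a \<Rightarrow> real) set" where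
  "div_ball d Q r = {P \<in> pdists. d Q P \<le> ereal r}"

definition Qhat0 :: "('a::finite \<Rightarrow> real) \<Rightarrow> ('a \<Rightarrow> real) \<Rightarrow> real \<Rightarrow> ('a \<Rightarrow> real) set" where
  "Qhat0 P0h P1h \<gamma> = {Q \<in> pdists. ereal \<gamma> \<le> KL Q P0h - KL Q P1h}"

definition Qhat1 :: "('a::finite \<Rightarrow> real) \<Rightarrow> ('a \<Rightarrow> real) \<Rightarrow> real \<Rightarrow> ('a \<Rightarrow> real) set" where
  "Qhat1 P0h P1h \<gamma> = {Q \<in> pdists. KL Q P0h - KL Q P1h \<le> ereal \<gamma>}"

text \<open>Worst-case error exponents (the min over the ball and the min over
  the acceptance region, written as infima).\<close>
definition worst_exp0 ::
  "(('a::finite \<Rightarrow> real) \<Rightarrow> ('a \<Rightarrow> real) \<Rightarrow> ereal) \<Rightarrow> ('a \<Rightarrow> real) \<Rightarrow> ('a \<Rightarrow> real) \<Rightarrow> real \<Rightarrow> real \<Rightarrow> ereal" where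
  "worst_exp0 d P0h P1h \<gamma> r =
     (INF P0 \<in> div_ball d P0h r. INF Q \<in> Qhat0 P0h P1h \<gamma>. KL Q P0)"

definition worst_exp1 ::
  "(('a::finite \<Rightarrow> real) \<Rightarrow> ('a \<Rightarrow> real) \<Rightarrow> ereal) \<Rightarrow> ('a \<Rightarrow> real) \<Rightarrow> ('a \<Rightarrow> real) \<Rightarrow> real \<Rightarrow> real \<Rightarrow> ereal" where
  "worst_exp1 d P0h P1h \<gamma> r =
     (INF P1 \<in> div_ball d P1h r. INF Q \<in> Qhat1 P0h P1h \<gamma>. KL Q P1)"

definition tilt :: "('a::finite \<Rightarrow> real) \<Rightarrow> ('a \<Rightarrow> real) \<Rightarrow> real \<Rightarrow> 'a \<Rightarrow> real" where
  "tilt P0 P1 l x = P0 x powr (1 - l) * P1 x powr l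
                     / (\<Sum>a\<in>UNIV. P0 a powr (1 - l) * P1 a powr l)"

definition variance_under :: "('a::finite \<Rightarrow> real) \<Rightarrow> ('a \<Rightarrow> real) \<Rightarrow> real" where
  "variance_under P g = (\<Sum>x\<in>UNIV. P x * (g x - (\<Sum>y\<in>UNIV. P y * g y))\<^sup>2)"

definition admissible_div ::
  "(('a::finite \<Rightarrow> real) \<Rightarrow> ('a \<Rightarrow> real) \<Rightarrow> ereal) \<Rightarrow> real \<Rightarrow> bool" where
  "admissible_div d \<alpha> \<longleftrightarrow>
     (0 < \<alpha> \<and> d = renyi_div \<alpha>) \<or>
     (\<exists>f f' f''. convex_on {0..} f \<and> f 1 = 0 \<and>
        (\<forall>t>0. (f has_real_derivative f' t) (at t) \<and> (f' has_real_derivative f'' t) (at t)) \<and>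
        \<alpha> = f'' 1 \<and> 0 < \<alpha> \<and> d = f_div f)"

end

theory Submission
  imports Defs
begin

lemma deriv_ratio:
  fixes p p' :: "real \<Rightarrow> real"
  assumes "(p' has_real_derivative a) (at 1)" "p' 1 = 0" "0 < e"
  shows "\<exists>\<delta>>0. \<forall>s. s \<noteq> 1 \<and> \<bar>s - 1\<bar> < \<delta> \<longrightarrow> \<bar>p' s / (s - 1) - a\<bar> < e"
proof -
  have "((\<lambda>y. (p' y - p' 1) / (y - 1)) \<longlongrightarrow> a) (at 1)"
    using assms(1) by (simp add: has_field_derivative_iff)
  then have "((\<lambda>y. p' y / (y - 1)) \<longlongrightarrow> a) (at 1)" using assms(2) by simp
  from LIM_D[OF this assms(3)] show ?thesis by (auto simp: dist_real_def)
qed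

lemma quad_lower:
  fixes p p' :: "real \<Rightarrow> real"
  assumes der: "\<And>t. 0 < t \<Longrightarrow> (p has_real_derivative p' t) (at t)"
    and p1: "p 1 = 0" and p'1: "p' 1 = 0" and d2: "(p' has_real_derivative a) (at 1)"
    and c: "c < a / 2"
  shows "\<exists>\<rho>>0. \<rho> < 1 \<and> (\<forall>t. \<bar>t - 1\<bar> \<le> \<rho> \<longrightarrow> c * (t - 1)\<^sup>2 \<le> p t)"
proof -
  obtain \<delta> where \<delta>: "\<delta> > 0" "\<forall>s. s \<noteq> 1 \<and> \<bar>s - 1\<bar> < \<delta> \<longrightarrow> \<bar>p' s / (s - 1) - a\<bar> < a - 2 * c"
    using deriv_ratio[OF d2 p'1, of "a - 2*c"] c by auto
  define \<rho> where "\<rho> = min (\<delta>/2) (1/2)"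
  have \<rho>: "\<rho> > 0" "\<rho> < 1" "\<rho> < \<delta>" using \<delta> by (auto simp: \<rho>_def)
  define k where "k t = p t - c * (t - 1)\<^sup>2" for t
  define k' where "k' t = p' t - 2 * c * (t - 1)" for t
  have kd: "(k has_real_derivative k' t) (at t)" if "0 < t" for t
    unfolding k_def k'_def using der[OF that]
    by (auto intro!: derivative_eq_intros simp: power2_eq_square algebra_simps)
  have pos: "p' s > 2 * c * (s - 1)" if "1 < s" "s - 1 < \<delta>" for s
  proof -
    have "\<bar>p' s / (s - 1) - a\<bar> < a - 2 * c" using \<delta>(2) that by auto
    then have "p' s / (s - 1) > 2 * c" by linarith
    then show ?thesis using that by (simp add: field_simps)
  qed
  have neg: "p' s < 2 * c * (s - 1)" if "s < 1" "1 - s < \<delta>" for s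
  proof -
    have "\<bar>p' s / (s - 1) - a\<bar> < a - 2 * c" using \<delta>(2) that by auto
    then have "p' s / (s - 1) > 2 * c" by linarith
    then show ?thesis using that by (simp add: field_simps)
  qed
  have "c * (t - 1)\<^sup>2 \<le> p t" if t: "\<bar>t - 1\<bar> \<le> \<rho>" for t
  proof -
    consider "t = 1" | "t > 1" | "t < 1" by linarith
    then show ?thesis
    proof cases
      case 1 then show ?thesis using p1 by simp
    next
      case 2
      obtain z where z: "1 < z" "z < t" "k t - k 1 = (t - 1) * k' z"
        using MVT2[OF 2, of k k'] kd \<rho> t by force
      have "k' z > 0" using pos[of z] z t \<rho> unfolding k'_def by auto
      then have "(t - 1) * k' z > 0" using z by simp
      then have "k t \<ge> k 1" using z by linarith
      then show ?thesis using p1 by (simp add: k_def)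
    next
      case 3
      have "t > 0" using t \<rho> 3 by auto
      obtain z where z: "t < z" "z < 1" "k 1 - k t = (1 - t) * k' z"
        using MVT2[OF 3, of k k'] kd \<open>t>0\<close> by force
      have "k' z < 0" using neg[of z] z t \<rho> unfolding k'_def by auto
      then have "(1 - t) * k' z < 0" using z by (simp add: mult_pos_neg)
      then have "k t \<ge> k 1" using z by linarith
      then show ?thesis using p1 by (simp add: k_def)
    qed
  qed
  then show ?thesis using \<rho> by blast
qed

lemma quad_upper:
  fixes p p' :: "real \<Rightarrow> real"
  assumes der: "\<And>t. 0 < t \<Longrightarrow> (p has_real_derivative p' t) (at t)"
    and p1: "p 1 = 0" and p'1: "p' 1 = 0" and d2: "(p' has_real_derivative a) (at 1)"
    and c: "a / 2 < c"
  shows "\<exists>\<rho>>0. \<rho> < 1 \<and> (\<forall>t. \<bar>t - 1\<bar> \<le> \<rho> \<longrightarrow> p t \<le> c * (t - 1)\<^sup>2)"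
proof -
  obtain \<delta> where \<delta>: "\<delta> > 0" "\<forall>s. s \<noteq> 1 \<and> \<bar>s - 1\<bar> < \<delta> \<longrightarrow> \<bar>p' s / (s - 1) - a\<bar> < 2 * c - a"
    using deriv_ratio[OF d2 p'1, of "2*c - a"] c by auto
  define \<rho> where "\<rho> = min (\<delta>/2) (1/2)"
  have \<rho>: "\<rho> > 0" "\<rho> < 1" "\<rho> < \<delta>" using \<delta> by (auto simp: \<rho>_def)
  define k where "k t = p t - c * (t - 1)\<^sup>2" for t
  define k' where "k' t = p' t - 2 * c * (t - 1)" for t
  have kd: "(k has_real_derivative k' t) (at t)" if "0 < t" for t
    unfolding k_def k'_def using der[OF that]
    by (auto intro!: derivative_eq_intros simp: power2_eq_square algebra_simps)
  have pos: "p' s < 2 * c * (s - 1)" if "1 < s" "s - 1 < \<delta>" for s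
  proof -
    have "\<bar>p' s / (s - 1) - a\<bar> < 2 * c - a" using \<delta>(2) that by auto
    then have "p' s / (s - 1) < 2 * c" by linarith
    then show ?thesis using that by (simp add: field_simps)
  qed
  have neg: "p' s > 2 * c * (s - 1)" if "s < 1" "1 - s < \<delta>" for s
  proof -
    have "\<bar>p' s / (s - 1) - a\<bar> < 2 * c - a" using \<delta>(2) that by auto
    then have "p' s / (s - 1) < 2 * c" by linarith
    then show ?thesis using that by (simp add: field_simps)
  qed
  have "p t \<le> c * (t - 1)\<^sup>2" if t: "\<bar>t - 1\<bar> \<le> \<rho>" for t
  proof -
    consider "t = 1" | "t > 1" | "t < 1" by linarith
    then show ?thesis
    proof cases
      case 1 then show ?thesis using p1 by simp
    next
      case 2
      obtain z where z: "1 < z" "z < t" "k t - k 1 = (t - 1) * k' z"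
        using MVT2[OF 2, of k k'] kd \<rho> t by force
      have "k' z < 0" using pos[of z] z t \<rho> unfolding k'_def by auto
      then have "(t - 1) * k' z < 0" using z by (simp add: mult_pos_neg)
      then have "k t \<le> k 1" using z by linarith
      then show ?thesis using p1 by (simp add: k_def)
    next
      case 3
      have "t > 0" using t \<rho> 3 by auto
      obtain z where z: "t < z" "z < 1" "k 1 - k t = (1 - t) * k' z"
        using MVT2[OF 3, of k k'] kd \<open>t>0\<close> by force
      have "k' z > 0" using neg[of z] z t \<rho> unfolding k'_def by auto
      then have "(1 - t) * k' z > 0" using z by simp
      then have "k t \<le> k 1" using z by linarith
      then show ?thesis using p1 by (simp add: k_def)
    qed
  qed
  then show ?thesis using \<rho> by blast
qed

lemma far_bound:
  fixes p p' :: "real \<Rightarrow> real"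
  assumes der: "\<And>t. 0 < t \<Longrightarrow> (p has_real_derivative p' t) (at t)"
    and dn: "\<And>t. 0 < t \<Longrightarrow> t < 1 \<Longrightarrow> p' t \<le> 0"
    and up: "\<And>t. 1 < t \<Longrightarrow> 0 \<le> p' t"
    and t: "0 < t"
  shows "t \<le> u \<Longrightarrow> u \<le> 1 \<Longrightarrow> p u \<le> p t"
    and "1 \<le> u \<Longrightarrow> u \<le> t \<Longrightarrow> p u \<le> p t"
proof -
  have cont: "continuous_on {a..b} p" if "0 < a" for a b
  proof (intro continuous_at_imp_continuous_on ballI)
    fix x assume "x \<in> {a..b}"
    then have "0 < x" using that by auto
    then show "isCont p x" using der DERIV_isCont by blast
  qed
  show "t \<le> u \<Longrightarrow> u \<le> 1 \<Longrightarrow> p u \<le> p t"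
  proof (rule DERIV_nonpos_imp_decreasing_open[of t u p])
    fix x assume "t \<le> u" "u \<le> 1" "t < x" "x < u"
    then show "\<exists>y. DERIV p x :> y \<and> y \<le> 0" using der dn t by (intro exI[of _ "p' x"]) auto
  qed (use cont t in auto)
  show "1 \<le> u \<Longrightarrow> u \<le> t \<Longrightarrow> p u \<le> p t"
  proof (rule DERIV_nonneg_imp_increasing_open[of u t p])
    fix x assume "1 \<le> u" "u \<le> t" "u < x" "x < t"
    then show "\<exists>y. DERIV p x :> y \<and> y \<ge> 0" using der up t by (intro exI[of _ "p' x"]) auto
  qed (use cont t in auto)
qed

lemma profile:
  fixes p p' :: "real \<Rightarrow> real"
  assumes der: "\<And>t. 0 < t \<Longrightarrow> (p has_real_derivative p' t) (at t)"
    and p1: "p 1 = 0" and p'1: "p' 1 = 0" and d2: "(p' has_real_derivative a) (at 1)"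
    and dn: "\<And>t. 0 < t \<Longrightarrow> t < 1 \<Longrightarrow> p' t \<le> 0"
    and up: "\<And>t. 1 < t \<Longrightarrow> 0 \<le> p' t"
    and c: "c < a / 2"
  shows "\<exists>\<rho>>0. \<rho> < 1 \<and> (\<forall>t. \<bar>t - 1\<bar> \<le> \<rho> \<longrightarrow> c * (t - 1)\<^sup>2 \<le> p t)
           \<and> (\<forall>t>0. \<rho> \<le> \<bar>t - 1\<bar> \<longrightarrow> c * \<rho>\<^sup>2 \<le> p t)"
proof -
  obtain \<rho> where \<rho>: "\<rho> > 0" "\<rho> < 1" "\<forall>t. \<bar>t - 1\<bar> \<le> \<rho> \<longrightarrow> c * (t - 1)\<^sup>2 \<le> p t"
    using quad_lower[OF der p1 p'1 d2 c] by blast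
  have "c * \<rho>\<^sup>2 \<le> p t" if "t > 0" "\<rho> \<le> \<bar>t - 1\<bar>" for t
  proof (cases "t < 1")
    case True
    then have "t \<le> 1 - \<rho>" using that by auto
    then have "p (1 - \<rho>) \<le> p t" using far_bound(1)[OF der dn up \<open>t>0\<close>, of "1-\<rho>"] \<rho> by auto
    moreover have "\<bar>(1 - \<rho>) - 1\<bar> \<le> \<rho>" using \<rho> by simp
    then have "c * ((1 - \<rho>) - 1)\<^sup>2 \<le> p (1 - \<rho>)" using \<rho>(3) by blast
    moreover have "((1 - \<rho>) - 1)\<^sup>2 = \<rho>\<^sup>2" by (simp add: power2_eq_square)
    ultimately show ?thesis by simp
  next
    case False
    then have "1 + \<rho> \<le> t" using that by auto
    then have "p (1 + \<rho>) \<le> p t" using far_bound(2)[OF der dn up \<open>t>0\<close>, of "1+\<rho>"] \<rho> by auto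
    moreover have "\<bar>(1 + \<rho>) - 1\<bar> \<le> \<rho>" using \<rho> by simp
    then have "c * ((1 + \<rho>) - 1)\<^sup>2 \<le> p (1 + \<rho>)" using \<rho>(3) by blast
    ultimately show ?thesis by simp
  qed
  then show ?thesis using \<rho> by blast
qed

lemma profile_nonneg:
  fixes p p' :: "real \<Rightarrow> real"
  assumes der: "\<And>t. 0 < t \<Longrightarrow> (p has_real_derivative p' t) (at t)"
    and p1: "p 1 = 0"
    and dn: "\<And>t. 0 < t \<Longrightarrow> t < 1 \<Longrightarrow> p' t \<le> 0"
    and up: "\<And>t. 1 < t \<Longrightarrow> 0 \<le> p' t"
    and t: "0 < t"
  shows "0 \<le> p t"
  using far_bound[OF der dn up t, of 1] p1 by (cases "t \<le> 1") auto

definition amin :: "('a::finite \<Rightarrow> real) \<Rightarrow> real" where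
  "amin A = Min (range A)"

lemma amin_le: "amin A \<le> A x"
  unfolding amin_def by (rule Min_le) auto

lemma amin_pos: "\<forall>x. 0 < A x \<Longrightarrow> 0 < amin A"
  unfolding amin_def by (subst Min_gr_iff) auto

lemma sum_lower:
  fixes A t v :: "'a::finite \<Rightarrow> real"
  assumes A: "\<forall>x. 0 < A x" and v0: "\<forall>x. 0 \<le> v x"
    and near: "\<forall>x. \<bar>t x - 1\<bar> \<le> \<rho> \<longrightarrow> c * (t x - 1)\<^sup>2 \<le> v x"
    and far: "\<forall>x. \<rho> \<le> \<bar>t x - 1\<bar> \<longrightarrow> m \<le> v x"
    and small: "(\<Sum>x\<in>UNIV. A x * v x) < amin A * m" and m: "0 < m"
  shows "c * (\<Sum>x\<in>UNIV. A x * (t x - 1)\<^sup>2) \<le> (\<Sum>x\<in>UNIV. A x * v x)"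
proof -
  have "\<bar>t x - 1\<bar> < \<rho>" for x
  proof (rule ccontr)
    assume "\<not> \<bar>t x - 1\<bar> < \<rho>"
    then have "m \<le> v x" using far by auto
    have "A x * v x \<le> (\<Sum>x\<in>UNIV. A x * v x)"
      by (rule member_le_sum) (use A v0 in \<open>auto intro: mult_nonneg_nonneg less_imp_le\<close>)
    moreover have "amin A * m \<le> A x * m" using m by (simp add: amin_le mult_right_mono)
    moreover have "A x * m \<le> A x * v x" using \<open>m \<le> v x\<close> A by (simp add: mult_left_mono less_imp_le)
    ultimately show False using small by linarith
  qed
  then have "A x * (c * (t x - 1)\<^sup>2) \<le> A x * v x" for x
    using near A by (simp add: mult_left_mono less_imp_le)
  then have "(\<Sum>x\<in>UNIV. A x * (c * (t x - 1)\<^sup>2)) \<le> (\<Sum>x\<in>UNIV. A x * v x)" by (rule sum_mono)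
  then show ?thesis by (simp add: sum_distrib_left algebra_simps)
qed

definition Sdev :: "('a::finite \<Rightarrow> real) \<Rightarrow> ('a \<Rightarrow> real) \<Rightarrow> real" where
  "Sdev A P = (\<Sum>x\<in>UNIV. A x * (P x / A x - 1)\<^sup>2)"

definition Lo_prop :: "(('a::finite \<Rightarrow> real) \<Rightarrow> ('a \<Rightarrow> real) \<Rightarrow> ereal) \<Rightarrow> ('a \<Rightarrow> real) \<Rightarrow> real \<Rightarrow> bool" where
  "Lo_prop d A \<alpha> \<longleftrightarrow> (\<forall>c. 0 < c \<and> c < \<alpha> / 2 \<longrightarrow>
     (\<exists>\<kappa>>0. \<forall>P\<in>pdists. d A P \<le> ereal \<kappa> \<longrightarrow> ereal (c * Sdev A P) \<le> d A P))"

definition Up_prop :: "(('a::finite \<Rightarrow> real) \<Rightarrow> ('a \<Rightarrow> real) \<Rightarrow> ereal) \<Rightarrow> ('a \<Rightarrow> real) \<Rightarrow> real \<Rightarrow> bool" where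
  "Up_prop d A \<alpha> \<longleftrightarrow> (\<forall>c. \<alpha> / 2 < c \<longrightarrow>
     (\<exists>\<rho>>0. \<forall>P\<in>pdists. (\<forall>x. \<bar>P x / A x - 1\<bar> \<le> \<rho>) \<longrightarrow> d A P \<le> ereal (c * Sdev A P)))"

lemma pdists_sum: "P \<in> pdists \<Longrightarrow> (\<Sum>x\<in>UNIV. P x) = 1"
  and pdists_nonneg: "P \<in> pdists \<Longrightarrow> 0 \<le> P x"
  by (auto simp: pdists_def)

lemma basic_facts:
  fixes A Qs :: "'a::finite \<Rightarrow> real"
  assumes A: "A \<in> pdists" "\<forall>x. 0 < A x" and Qs: "Qs \<in> pdists"
  shows "(\<Sum>x\<in>UNIV. A x * (Qs x / A x - 1)) = 0"
    and "variance_under A (\<lambda>x. Qs x / A x) = (\<Sum>x\<in>UNIV. A x * (Qs x / A x - 1)\<^sup>2)"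
    and "(\<Sum>x\<in>UNIV. Qs x * (Qs x / A x - 1)) = (\<Sum>x\<in>UNIV. A x * (Qs x / A x - 1)\<^sup>2)"
proof -
  have e1: "A x * (Qs x / A x - 1) = Qs x - A x" for x using A(2)[rule_format, of x] by (simp add: field_simps)
  show s0: "(\<Sum>x\<in>UNIV. A x * (Qs x / A x - 1)) = 0"
    by (simp add: e1 sum_subtractf pdists_sum[OF A(1)] pdists_sum[OF Qs])
  have e2: "A x * (Qs x / A x) = Qs x" for x using A(2)[rule_format, of x] by simp
  have m: "(\<Sum>y\<in>UNIV. A y * (Qs y / A y)) = 1" unfolding e2 by (rule pdists_sum[OF Qs])
  show "variance_under A (\<lambda>x. Qs x / A x) = (\<Sum>x\<in>UNIV. A x * (Qs x / A x - 1)\<^sup>2)"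
    unfolding variance_under_def m ..
  have e3: "Qs x * (Qs x / A x - 1) = A x * (Qs x / A x - 1)\<^sup>2 + A x * (Qs x / A x - 1)" for x
    using A(2)[rule_format, of x] by (simp add: field_simps power2_eq_square)
  show "(\<Sum>x\<in>UNIV. Qs x * (Qs x / A x - 1)) = (\<Sum>x\<in>UNIV. A x * (Qs x / A x - 1)\<^sup>2)"
    by (simp add: e3 sum.distrib s0)
qed

lemma ln_lower2: "\<bar>u::real\<bar> \<le> 1/2 \<Longrightarrow> u - 2 * u\<^sup>2 \<le> ln (1 + u)"
proof (cases "u \<ge> 0")
  case True
  assume "\<bar>u\<bar> \<le> 1/2"
  then have "u - u\<^sup>2 \<le> ln (1 + u)" using True by (intro ln_one_plus_pos_lower_bound) auto
  then show ?thesis by (smt (verit) zero_le_power2)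
next
  case False
  assume "\<bar>u\<bar> \<le> 1/2"
  then have "- (-u) - 2 * (-u)\<^sup>2 \<le> ln (1 - (-u))" using False by (intro ln_one_minus_pos_lower_bound) auto
  then show ?thesis by simp
qed

lemma ereal_between:
  assumes "ereal a \<le> W" "W \<le> ereal b" "a = m - e" "b = m + e"
  shows "\<bar>W - ereal m\<bar> \<le> ereal e"
proof -
  obtain w where w: "W = ereal w" using assms by (cases W) auto
  then show ?thesis using assms by auto
qed

lemma cs_weighted:
  fixes A h t :: "'a::finite \<Rightarrow> real"
  assumes "\<forall>x. 0 < A x"
  shows "(\<Sum>x\<in>UNIV. A x * h x * t x) \<le> sqrt ((\<Sum>x\<in>UNIV. A x * (h x)\<^sup>2) * (\<Sum>x\<in>UNIV. A x * (t x)\<^sup>2))"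
proof -
  have "(\<Sum>x\<in>UNIV. (sqrt (A x) * h x) * (sqrt (A x) * t x))\<^sup>2
        \<le> (\<Sum>x\<in>UNIV. (sqrt (A x) * h x)\<^sup>2) * (\<Sum>x\<in>UNIV. (sqrt (A x) * t x)\<^sup>2)"
    by (rule Cauchy_Schwarz_ineq_sum)
  moreover have "(sqrt (A x) * h x) * (sqrt (A x) * t x) = A x * h x * t x" for x
    using assms[rule_format, of x] by (simp add: algebra_simps)
  moreover have "(sqrt (A x) * h x)\<^sup>2 = A x * (h x)\<^sup>2" "(sqrt (A x) * t x)\<^sup>2 = A x * (t x)\<^sup>2" for x
    using assms[rule_format, of x] by (simp_all add: power_mult_distrib)
  ultimately have "(\<Sum>x\<in>UNIV. A x * h x * t x)\<^sup>2 \<le> (\<Sum>x\<in>UNIV. A x * (h x)\<^sup>2) * (\<Sum>x\<in>UNIV. A x * (t x)\<^sup>2)"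
    by simp
  then show ?thesis by (meson real_le_rsqrt)
qed

lemma generic_lower:
  fixes A Qs :: "'a::finite \<Rightarrow> real" and d :: "('a \<Rightarrow> real) \<Rightarrow> ('a \<Rightarrow> real) \<Rightarrow> ereal"
    and H :: "('a \<Rightarrow> real) set" and \<alpha> E \<epsilon> :: real
  assumes A: "A \<in> pdists" "\<forall>x. 0 < A x" and \<alpha>: "0 < \<alpha>"
    and Lo: "Lo_prop d A \<alpha>"
    and Qs: "Qs \<in> pdists"
    and LB: "\<forall>Q\<in>H. \<forall>P\<in>pdists. ereal (E + 1 - (\<Sum>x\<in>UNIV. Qs x * P x / A x)) \<le> KL Q P"
    and \<epsilon>: "0 < \<epsilon>"
  shows "eventually (\<lambda>r. ereal (E - sqrt (r * (2 / \<alpha> * variance_under A (\<lambda>x. Qs x / A x))) - \<epsilon> * sqrt r)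
            \<le> (INF P\<in>div_ball d A r. INF Q\<in>H. KL Q P)) (at_right 0)"
proof -
  define h where "h x = Qs x / A x - 1" for x
  define V where "V = (\<Sum>x\<in>UNIV. A x * (h x)\<^sup>2)"
  define \<theta> where "\<theta> = 2 / \<alpha> * V"
  have var: "variance_under A (\<lambda>x. Qs x / A x) = V"
    unfolding V_def h_def by (rule basic_facts(2)[OF A Qs])
  have V0: "0 \<le> V" unfolding V_def using A(2) by (intro sum_nonneg mult_nonneg_nonneg) (auto simp: less_imp_le)
  have th0: "0 \<le> \<theta>" using V0 \<alpha> by (simp add: \<theta>_def)
  define T where "T = (sqrt \<theta> + \<epsilon>)\<^sup>2"
  have T: "\<theta> < T"
  proof -
    have "sqrt \<theta> < sqrt \<theta> + \<epsilon>" using \<epsilon> by simp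
    then have "(sqrt \<theta>)\<^sup>2 < (sqrt \<theta> + \<epsilon>)\<^sup>2" using th0 by (intro power_strict_mono) auto
    then show ?thesis using th0 by (simp add: T_def)
  qed
  have Tpos: "0 < T" using T th0 by linarith
  define c where "c = max (V / T) (\<alpha> / 4)"
  have c0: "0 < c" using \<alpha> by (simp add: c_def)
  have "V / T < \<alpha> / 2"
  proof -
    have "V = \<alpha> / 2 * \<theta>" using \<alpha> by (simp add: \<theta>_def)
    also have "\<dots> < \<alpha> / 2 * T" using T \<alpha> by simp
    finally show ?thesis using Tpos by (simp add: field_simps)
  qed
  then have c1: "c < \<alpha> / 2" using \<alpha> by (simp add: c_def)
  have cV: "sqrt (V / c) \<le> sqrt \<theta> + \<epsilon>"
  proof (cases "V = 0")
    case True then show ?thesis using th0 \<epsilon> by simp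
  next
    case False
    then have "V / c \<le> V / (V / T)" using V0 Tpos c0
      by (intro divide_left_mono) (auto simp: c_def)
    also have "\<dots> = T" using False by simp
    finally have "sqrt (V / c) \<le> sqrt T" by simp
    also have "sqrt T = sqrt \<theta> + \<epsilon>" unfolding T_def using th0 \<epsilon> by simp
    finally show ?thesis .
  qed
  obtain \<kappa> where \<kappa>: "\<kappa> > 0" "\<forall>P\<in>pdists. d A P \<le> ereal \<kappa> \<longrightarrow> ereal (c * Sdev A P) \<le> d A P"
    using Lo c0 c1 unfolding Lo_prop_def by blast
  have ev: "eventually (\<lambda>r. r \<in> {0<..<\<kappa>}) (at_right 0)"
    using \<kappa>(1) by (rule eventually_at_right_real)
  show ?thesis
  proof (rule eventually_mono[OF ev])
    fix r assume r: "r \<in> {0<..<\<kappa>}"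
    show "ereal (E - sqrt (r * (2 / \<alpha> * variance_under A (\<lambda>x. Qs x / A x))) - \<epsilon> * sqrt r)
            \<le> (INF P\<in>div_ball d A r. INF Q\<in>H. KL Q P)"
    proof (intro INF_greatest)
      fix P Q assume P: "P \<in> div_ball d A r" and Q: "Q \<in> H"
      have Pp: "P \<in> pdists" and dP: "d A P \<le> ereal r" using P by (auto simp: div_ball_def)
      have "d A P \<le> ereal \<kappa>" using dP r by (meson ereal_less_eq(3) greaterThanLessThan_iff less_imp_le order_trans)
      then have "ereal (c * Sdev A P) \<le> ereal r" using \<kappa>(2) Pp dP by (meson order_trans)
      then have cS: "c * Sdev A P \<le> r" by simp
      have S0: "0 \<le> Sdev A P" unfolding Sdev_def using A(2) by (intro sum_nonneg mult_nonneg_nonneg) (auto simp: less_imp_le)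
      define y where "y = (\<Sum>x\<in>UNIV. A x * h x * (P x / A x - 1))"
      have ey: "A x * h x * (P x / A x - 1) = Qs x * P x / A x - Qs x - P x + A x" for x
        using A(2)[rule_format, of x] by (simp add: h_def field_simps)
      have yid: "y = (\<Sum>x\<in>UNIV. Qs x * P x / A x) - 1"
        unfolding y_def ey by (simp add: sum.distrib sum_subtractf pdists_sum[OF A(1)] pdists_sum[OF Pp] pdists_sum[OF Qs])
      have "y \<le> sqrt (V * Sdev A P)" unfolding y_def V_def Sdev_def by (rule cs_weighted[OF A(2)])
      also have "\<dots> \<le> sqrt (V * (r / c))"
        using cS c0 V0 by (intro real_sqrt_le_mono mult_left_mono) (auto simp: field_simps)
      also have "\<dots> = sqrt r * sqrt (V / c)" by (simp add: real_sqrt_mult[symmetric])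
      also have "\<dots> \<le> sqrt r * (sqrt \<theta> + \<epsilon>)" using cV r by (intro mult_left_mono) auto
      finally have yb: "y \<le> sqrt r * sqrt \<theta> + \<epsilon> * sqrt r" by (simp add: algebra_simps)
      have "ereal (E - sqrt (r * (2 / \<alpha> * variance_under A (\<lambda>x. Qs x / A x))) - \<epsilon> * sqrt r)
            \<le> ereal (E + 1 - (\<Sum>x\<in>UNIV. Qs x * P x / A x))"
      proof -
        have "sqrt (r * (2 / \<alpha> * variance_under A (\<lambda>x. Qs x / A x))) = sqrt r * sqrt \<theta>"
          unfolding var \<theta>_def by (rule real_sqrt_mult)
        then show ?thesis using yb yid by simp
      qed
      also have "\<dots> \<le> KL Q P" using LB Q Pp by blast
      finally show "ereal (E - sqrt (r * (2 / \<alpha> * variance_under A (\<lambda>x. Qs x / A x))) - \<epsilon> * sqrt r) \<le> KL Q P" .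
    qed
  qed
qed

lemma generic_upper:
  fixes A Qs :: "'a::finite \<Rightarrow> real" and d :: "('a \<Rightarrow> real) \<Rightarrow> ('a \<Rightarrow> real) \<Rightarrow> ereal"
    and H :: "('a \<Rightarrow> real) set" and \<alpha> E \<epsilon> :: real
  assumes A: "A \<in> pdists" "\<forall>x. 0 < A x" and \<alpha>: "0 < \<alpha>"
    and Up: "Up_prop d A \<alpha>"
    and Qs: "Qs \<in> pdists" "\<forall>x. 0 < Qs x" "Qs \<in> H"
    and E: "E = (\<Sum>x\<in>UNIV. Qs x * ln (Qs x / A x))"
    and \<epsilon>: "0 < \<epsilon>"
  shows "eventually (\<lambda>r. (INF P\<in>div_ball d A r. INF Q\<in>H. KL Q P)
            \<le> ereal (E - sqrt (r * (2 / \<alpha> * variance_under A (\<lambda>x. Qs x / A x))) + \<epsilon> * sqrt r)) (at_right 0)"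
proof -
  define h where "h x = Qs x / A x - 1" for x
  define V where "V = (\<Sum>x\<in>UNIV. A x * (h x)\<^sup>2)"
  define \<theta> where "\<theta> = 2 / \<alpha> * V"
  have var: "variance_under A (\<lambda>x. Qs x / A x) = V"
    unfolding V_def h_def by (rule basic_facts(2)[OF A Qs(1)])
  have sh: "(\<Sum>x\<in>UNIV. A x * h x) = 0" unfolding h_def by (rule basic_facts(1)[OF A Qs(1)])
  have sQh: "(\<Sum>x\<in>UNIV. Qs x * h x) = V" unfolding h_def V_def by (rule basic_facts(3)[OF A Qs(1)])
  have V0: "0 \<le> V" unfolding V_def using A(2) by (intro sum_nonneg mult_nonneg_nonneg) (auto simp: less_imp_le)
  have lim: "((\<lambda>c. sqrt (V / c)) \<longlongrightarrow> sqrt (V / (\<alpha> / 2))) (at_right (\<alpha> / 2))"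
    using \<alpha> by (intro tendsto_intros) auto
  have "sqrt (V / (\<alpha> / 2)) = sqrt \<theta>" by (simp add: \<theta>_def)
  then have "eventually (\<lambda>c. sqrt \<theta> - \<epsilon> / 2 < sqrt (V / c)) (at_right (\<alpha> / 2))"
    using order_tendstoD(1)[OF lim, of "sqrt \<theta> - \<epsilon> / 2"] \<epsilon> by simp
  moreover have "eventually (\<lambda>c. \<alpha> / 2 < c) (at_right (\<alpha> / 2))" by (rule eventually_at_right_less)
  ultimately have "eventually (\<lambda>c. sqrt \<theta> - \<epsilon> / 2 < sqrt (V / c) \<and> \<alpha> / 2 < c) (at_right (\<alpha> / 2))"
    by (rule eventually_conj)
  then obtain c where c: "sqrt \<theta> - \<epsilon> / 2 < sqrt (V / c)" "\<alpha> / 2 < c"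
    using eventually_happens'[OF trivial_limit_at_right_real] by blast
  have c0: "0 < c" using c \<alpha> by linarith
  obtain \<rho>0 where \<rho>0: "\<rho>0 > 0" "\<forall>P\<in>pdists. (\<forall>x. \<bar>P x / A x - 1\<bar> \<le> \<rho>0) \<longrightarrow> d A P \<le> ereal (c * Sdev A P)"
    using Up c unfolding Up_prop_def by blast
  define \<rho> where "\<rho> = min \<rho>0 (1/2)"
  have \<rho>: "0 < \<rho>" "\<rho> \<le> \<rho>0" "\<rho> \<le> 1/2" using \<rho>0 by (auto simp: \<rho>_def)
  define k where "k = (if V = 0 then 0 else 1 / sqrt (c * V))"
  have k0: "0 \<le> k" using c0 V0 by (simp add: k_def)
  have kV: "k * V = sqrt (V / c)"
  proof (cases "V = 0")
    case False
    then have "V > 0" using V0 by simp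
    then have "V / sqrt (c * V) = sqrt (V / c)" using c0
      by (simp add: real_sqrt_divide real_sqrt_mult field_simps)
    then show ?thesis using False by (simp add: k_def)
  qed (simp add: k_def)
  have kkV: "k\<^sup>2 * V * c \<le> 1"
  proof (cases "V = 0")
    case False
    then have "V > 0" using V0 by simp
    then show ?thesis using c0 by (simp add: k_def power_divide)
  qed (simp add: k_def)
  define M where "M = (\<Sum>x\<in>UNIV. \<bar>h x\<bar>)"
  define N where "N = (\<Sum>x\<in>UNIV. Qs x * (h x)\<^sup>2)"
  have M0: "0 \<le> M" unfolding M_def by (intro sum_nonneg) auto
  have N0: "0 \<le> N" unfolding N_def using Qs(2) by (intro sum_nonneg mult_nonneg_nonneg) (auto simp: less_imp_le)
  have l1: "((\<lambda>r. k * sqrt r * M) \<longlongrightarrow> k * sqrt 0 * M) (at_right 0)"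
    by (intro tendsto_intros)
  have l2: "((\<lambda>r. k\<^sup>2 * sqrt r * N) \<longlongrightarrow> k\<^sup>2 * sqrt 0 * N) (at_right 0)"
    by (intro tendsto_intros)
  have ev1: "eventually (\<lambda>r. k * sqrt r * M < \<rho>) (at_right 0)"
    using order_tendstoD(2)[OF l1, of \<rho>] \<rho> by simp
  have ev2: "eventually (\<lambda>r. k\<^sup>2 * sqrt r * N < \<epsilon> / 4) (at_right 0)"
    using order_tendstoD(2)[OF l2, of "\<epsilon>/4"] \<epsilon> by simp
  have ev3: "eventually (\<lambda>r. 0 < r) (at_right (0::real))" by (rule eventually_at_right_less)
  show ?thesis
  proof (rule eventually_mono[OF eventually_conj[OF ev1 eventually_conj[OF ev2 ev3]]])
    fix r assume r: "k * sqrt r * M < \<rho> \<and> k\<^sup>2 * sqrt r * N < \<epsilon> / 4 \<and> 0 < r"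
    define u where "u x = k * sqrt r * h x" for x
    define P where "P x = A x * (1 + u x)" for x
    have hM: "\<bar>h x\<bar> \<le> M" for x unfolding M_def by (rule member_le_sum) auto
    have ub: "\<bar>u x\<bar> \<le> \<rho>" for x
    proof -
      have "\<bar>u x\<bar> = k * sqrt r * \<bar>h x\<bar>" using k0 r by (simp add: u_def abs_mult)
      also have "\<dots> \<le> k * sqrt r * M" using hM k0 r by (intro mult_left_mono) auto
      finally show ?thesis using r by linarith
    qed
    have Ppos: "0 < P x" for x
      using ub[of x] \<rho> A(2) by (auto simp: P_def intro!: mult_pos_pos)
    have Psum: "(\<Sum>x\<in>UNIV. P x) = 1"
    proof -
      have "(\<Sum>x\<in>UNIV. P x) = (\<Sum>x\<in>UNIV. A x) + k * sqrt r * (\<Sum>x\<in>UNIV. A x * h x)"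
        by (simp add: P_def u_def algebra_simps sum.distrib sum_distrib_left)
      then show ?thesis using sh pdists_sum[OF A(1)] by simp
    qed
    have Pp: "P \<in> pdists" using Ppos Psum by (auto simp: pdists_def less_imp_le)
    have tP: "P x / A x - 1 = u x" for x using A(2)[rule_format, of x] by (simp add: P_def)
    have "d A P \<le> ereal (c * Sdev A P)" using \<rho>0(2) Pp tP ub \<rho> by (metis order_trans)
    also have "Sdev A P = k\<^sup>2 * r * V"
      using r by (simp add: Sdev_def tP u_def V_def sum_distrib_left power_mult_distrib algebra_simps)
    also have "c * (k\<^sup>2 * r * V) \<le> r"
      using kkV r by (simp add: algebra_simps)
    finally have "d A P \<le> ereal r" by simp
    then have Pb: "P \<in> div_ball d A r" using Pp by (simp add: div_ball_def)
    have "(INF P\<in>div_ball d A r. INF Q\<in>H. KL Q P) \<le> (INF Q\<in>H. KL Q P)"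
      using Pb by (rule INF_lower)
    also have "\<dots> \<le> KL Qs P" using Qs(3) by (rule INF_lower)
    also have "KL Qs P = ereal (\<Sum>x\<in>UNIV. Qs x * ln (Qs x / P x))"
      using Ppos Qs(2) unfolding KL_def by (auto intro!: sum.cong simp: less_imp_neq[symmetric])
    also have "(\<Sum>x\<in>UNIV. Qs x * ln (Qs x / P x)) \<le> E - k * sqrt r * V + 2 * r * (k\<^sup>2 * N)"
    proof -
      have trm: "Qs x * ln (Qs x / P x) \<le> Qs x * ln (Qs x / A x) - k * sqrt r * (Qs x * h x) + 2 * r * (k\<^sup>2 * (Qs x * (h x)\<^sup>2))" for x
      proof -
        have "ln (Qs x / P x) = ln (Qs x / A x) - ln (1 + u x)"
        proof -
          have "1 + u x > 0" using ub[of x] \<rho> by linarith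
          then show ?thesis using A(2)[rule_format, of x] Qs(2)[rule_format, of x]
            by (simp add: P_def ln_div ln_mult)
        qed
        moreover have "u x - 2 * (u x)\<^sup>2 \<le> ln (1 + u x)" using ub[of x] \<rho> by (intro ln_lower2) auto
        ultimately have "ln (Qs x / P x) \<le> ln (Qs x / A x) - u x + 2 * (u x)\<^sup>2" by linarith
        then have "Qs x * ln (Qs x / P x) \<le> Qs x * (ln (Qs x / A x) - u x + 2 * (u x)\<^sup>2)"
          using Qs(2) by (simp add: less_imp_le mult_left_mono)
        then show ?thesis using r by (simp add: u_def algebra_simps power_mult_distrib)
      qed
      have "(\<Sum>x\<in>UNIV. Qs x * ln (Qs x / P x)) \<le> (\<Sum>x\<in>UNIV. Qs x * ln (Qs x / A x) - k * sqrt r * (Qs x * h x) + 2 * r * (k\<^sup>2 * (Qs x * (h x)\<^sup>2)))"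
        by (rule sum_mono) (rule trm)
      also have "\<dots> = E - k * sqrt r * V + 2 * r * (k\<^sup>2 * N)"
        by (simp add: E sum.distrib sum_subtractf sum_distrib_left[symmetric] sQh N_def)
      finally show ?thesis .
    qed
    also have "E - k * sqrt r * V + 2 * r * (k\<^sup>2 * N) \<le> E - sqrt (r * (2 / \<alpha> * variance_under A (\<lambda>x. Qs x / A x))) + \<epsilon> * sqrt r"
    proof -
      have a1: "sqrt (r * (2 / \<alpha> * variance_under A (\<lambda>x. Qs x / A x))) = sqrt r * sqrt \<theta>"
        unfolding var \<theta>_def by (rule real_sqrt_mult)
      have a2: "k * sqrt r * V = sqrt r * sqrt (V / c)" using kV by (simp add: algebra_simps)
      have "sqrt r * (sqrt \<theta> - \<epsilon> / 2) \<le> sqrt r * sqrt (V / c)" using c r by (intro mult_left_mono) auto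
      then have f1: "sqrt r * sqrt \<theta> - \<epsilon> / 2 * sqrt r \<le> sqrt r * sqrt (V / c)" by (simp add: algebra_simps)
      have "2 * r * (k\<^sup>2 * N) = 2 * sqrt r * (k\<^sup>2 * sqrt r * N)"
        using r by (simp add: algebra_simps)
      moreover have "2 * sqrt r * (k\<^sup>2 * sqrt r * N) \<le> 2 * sqrt r * (\<epsilon> / 4)"
        using r by (intro mult_left_mono) auto
      moreover have "2 * sqrt r * (\<epsilon> / 4) = \<epsilon> / 2 * sqrt r" by simp
      ultimately have f2: "2 * r * (k\<^sup>2 * N) \<le> \<epsilon> / 2 * sqrt r" by linarith
      show ?thesis unfolding a1 a2 using f1 f2 by linarith
    qed
    finally show "(INF P\<in>div_ball d A r. INF Q\<in>H. KL Q P) \<le> ereal (E - sqrt (r * (2 / \<alpha> * variance_under A (\<lambda>x. Qs x / A x))) + \<epsilon> * sqrt r)"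
      by simp
  qed
qed

lemma pos_powr: "0 < (a::real) \<Longrightarrow> 0 < a powr r"
  by simp

lemma tilt_Z_pos:
  fixes A B :: "'a::finite \<Rightarrow> real"
  assumes "\<forall>x. 0 < A x" "\<forall>x. 0 < B x"
  shows "0 < (\<Sum>a\<in>UNIV. A a powr (1 - \<mu>) * B a powr \<mu>)"
  using assms by (intro sum_pos mult_pos_pos pos_powr) auto

lemma tilt_pos:
  fixes A B :: "'a::finite \<Rightarrow> real"
  assumes "\<forall>x. 0 < A x" "\<forall>x. 0 < B x"
  shows "0 < tilt A B \<mu> x"
  using tilt_Z_pos[OF assms] assms unfolding tilt_def by (intro divide_pos_pos mult_pos_pos pos_powr) auto

lemma tilt_pdist:
  fixes A B :: "'a::finite \<Rightarrow> real"
  assumes "\<forall>x. 0 < A x" "\<forall>x. 0 < B x"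
  shows "tilt A B \<mu> \<in> pdists"
proof -
  have "(\<Sum>x\<in>UNIV. tilt A B \<mu> x) = 1"
    using tilt_Z_pos[OF assms, of \<mu>] unfolding tilt_def by (simp add: sum_divide_distrib[symmetric])
  then show ?thesis using tilt_pos[OF assms] by (auto simp: pdists_def less_imp_le)
qed

lemma tilt_swap: "tilt A B \<mu> = tilt B A (1 - \<mu>)"
  unfolding tilt_def by (simp add: mult.commute)

lemma KL_fin:
  fixes Q A :: "'a::finite \<Rightarrow> real"
  assumes "\<forall>x. 0 < A x"
  shows "KL Q A = ereal (\<Sum>x\<in>UNIV. Q x * ln (Q x / A x))"
  using assms unfolding KL_def by (auto intro!: sum.cong simp: less_imp_neq[symmetric])

lemma KL_diff:
  fixes Q A B :: "'a::finite \<Rightarrow> real"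
  assumes Q: "Q \<in> pdists" and A: "\<forall>x. 0 < A x" and B: "\<forall>x. 0 < B x"
  shows "KL Q A - KL Q B = ereal (\<Sum>x\<in>UNIV. Q x * ln (B x / A x))"
proof -
  have "Q x * ln (Q x / A x) - Q x * ln (Q x / B x) = Q x * ln (B x / A x)" for x
  proof (cases "Q x = 0")
    case False
    then have "Q x > 0" using pdists_nonneg[OF Q, of x] by simp
    then show ?thesis using A[rule_format, of x] B[rule_format, of x]
      by (simp add: ln_div algebra_simps)
  qed simp
  then show ?thesis unfolding KL_fin[OF A] KL_fin[OF B] by (simp add: sum_subtractf[symmetric])
qed

lemma tilt_LB:
  fixes A B Q P :: "'a::finite \<Rightarrow> real"
  assumes A: "\<forall>x. 0 < A x" and B: "\<forall>x. 0 < B x" and \<mu>: "0 \<le> \<mu>"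
    and Q: "Q \<in> pdists" and P: "P \<in> pdists"
    and QL: "(\<Sum>x\<in>UNIV. tilt A B \<mu> x * ln (B x / A x)) \<le> (\<Sum>x\<in>UNIV. Q x * ln (B x / A x))"
  shows "ereal ((\<Sum>x\<in>UNIV. tilt A B \<mu> x * ln (tilt A B \<mu> x / A x)) + 1
              - (\<Sum>x\<in>UNIV. tilt A B \<mu> x * P x / A x)) \<le> KL Q P"
proof -
  define Qs where "Qs = tilt A B \<mu>"
  define Z where "Z = (\<Sum>a\<in>UNIV. A a powr (1 - \<mu>) * B a powr \<mu>)"
  define L where "L x = ln (B x / A x)" for x
  have Z: "0 < Z" unfolding Z_def by (rule tilt_Z_pos[OF A B])
  have Qs_pos: "0 < Qs x" for x unfolding Qs_def by (rule tilt_pos[OF A B])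
  have Qs_p: "Qs \<in> pdists" unfolding Qs_def by (rule tilt_pdist[OF A B])
  have lnQ: "ln (Qs x / A x) = \<mu> * L x - ln Z" for x
  proof -
    have a: "0 < A x" "0 < B x" using A B by auto
    have "Qs x / A x = A x powr (1 - \<mu>) * B x powr \<mu> / (Z * A x)"
      unfolding Qs_def tilt_def Z_def by simp
    then have "ln (Qs x / A x) = (1 - \<mu>) * ln (A x) + \<mu> * ln (B x) - (ln Z + ln (A x))"
      using a Z by (simp add: ln_div ln_mult ln_powr)
    then show ?thesis using a by (simp add: L_def ln_div algebra_simps)
  qed
  have E: "(\<Sum>x\<in>UNIV. Qs x * ln (Qs x / A x)) = \<mu> * (\<Sum>x\<in>UNIV. Qs x * L x) - ln Z"
    by (simp add: lnQ algebra_simps sum_subtractf sum_distrib_left[symmetric] sum_distrib_right[symmetric]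
        pdists_sum[OF Qs_p])
  show ?thesis
  proof (cases "\<exists>x. 0 < Q x \<and> P x = 0")
    case True
    then show ?thesis by (simp add: KL_def)
  next
    case False
    then have KLe: "KL Q P = ereal (\<Sum>x\<in>UNIV. if Q x = 0 then 0 else Q x * ln (Q x / P x))"
      by (simp add: KL_def)
    have trm: "Q x * (\<mu> * L x - ln Z) + Q x - Qs x * P x / A x \<le> (if Q x = 0 then 0 else Q x * ln (Q x / P x))" for x
    proof (cases "Q x = 0")
      case True
      have "0 \<le> Qs x * P x / A x" using Qs_pos[of x] A pdists_nonneg[OF P, of x]
        by (intro divide_nonneg_pos mult_nonneg_nonneg) (auto simp: less_imp_le)
      then show ?thesis using True by simp
    next
      case qn: False
      then have q: "0 < Q x" using pdists_nonneg[OF Q, of x] by simp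
      then have p: "0 < P x" using False pdists_nonneg[OF P, of x] by force
      have a: "0 < A x" using A by auto
      define y where "y = Q x * A x / (Qs x * P x)"
      have y: "0 < y" unfolding y_def using q p a Qs_pos[of x] by simp
      have "ln (1 / y) \<le> 1 / y - 1" using y by (intro ln_le_minus_one) simp
      then have ly: "1 - 1 / y \<le> ln y" using y by (simp add: ln_div)
      have "ln (Q x / P x) = ln (Qs x / A x) + ln y"
        unfolding y_def using q p a Qs_pos[of x] by (simp add: ln_div ln_mult)
      then have "ln (Q x / P x) = (\<mu> * L x - ln Z) + ln y" by (simp add: lnQ)
      then have "Q x * ln (Q x / P x) = Q x * (\<mu> * L x - ln Z) + Q x * ln y" by (simp add: distrib_left)
      moreover have "Q x * (1 - 1 / y) \<le> Q x * ln y" using ly q by (simp add: mult_left_mono)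
      moreover have "Q x * (1 - 1 / y) = Q x - Qs x * P x / A x"
        unfolding y_def using q p a Qs_pos[of x] by (simp add: field_simps)
      ultimately show ?thesis using qn by simp
    qed
    have "(\<Sum>x\<in>UNIV. Q x * (\<mu> * L x - ln Z) + Q x - Qs x * P x / A x)
          \<le> (\<Sum>x\<in>UNIV. if Q x = 0 then 0 else Q x * ln (Q x / P x))"
      by (rule sum_mono) (rule trm)
    moreover have "(\<Sum>x\<in>UNIV. Q x * (\<mu> * L x - ln Z) + Q x - Qs x * P x / A x)
        = \<mu> * (\<Sum>x\<in>UNIV. Q x * L x) - ln Z + 1 - (\<Sum>x\<in>UNIV. Qs x * P x / A x)"
      by (simp add: algebra_simps sum_subtractf sum.distrib sum_distrib_left[symmetric]
          sum_distrib_right[symmetric] pdists_sum[OF Q])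
    moreover have "\<mu> * (\<Sum>x\<in>UNIV. Qs x * L x) \<le> \<mu> * (\<Sum>x\<in>UNIV. Q x * L x)"
      using QL \<mu> unfolding Qs_def L_def by (intro mult_left_mono) auto
    ultimately show ?thesis unfolding KLe Qs_def[symmetric] E by simp
  qed
qed

lemma Up_from_profile:
  fixes A :: "'a::finite \<Rightarrow> real" and p p' :: "real \<Rightarrow> real"
  assumes A: "\<forall>x. 0 < A x"
    and der: "\<And>t. 0 < t \<Longrightarrow> (p has_real_derivative p' t) (at t)"
    and p1: "p 1 = 0" and p'1: "p' 1 = 0" and d2: "(p' has_real_derivative a) (at 1)"
    and rel: "\<forall>P\<in>pdists. (\<forall>x. 0 < P x) \<longrightarrow> d A P = ereal (\<Sum>x\<in>UNIV. A x * p (P x / A x))"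
  shows "Up_prop d A a"
  unfolding Up_prop_def
proof (intro allI impI)
  fix c assume c: "a / 2 < c"
  obtain \<rho> where \<rho>: "\<rho> > 0" "\<rho> < 1" "\<forall>t. \<bar>t - 1\<bar> \<le> \<rho> \<longrightarrow> p t \<le> c * (t - 1)\<^sup>2"
    using quad_upper[OF der p1 p'1 d2 c] by blast
  have "\<forall>P\<in>pdists. (\<forall>x. \<bar>P x / A x - 1\<bar> \<le> \<rho>) \<longrightarrow> d A P \<le> ereal (c * Sdev A P)"
  proof (intro ballI impI)
    fix P assume P: "P \<in> pdists" and near: "\<forall>x. \<bar>P x / A x - 1\<bar> \<le> \<rho>"
    have "0 < P x / A x" for x using near[rule_format, of x] \<rho> by linarith
    then have Ppos: "0 < P x" for x using A[rule_format, of x] by (simp add: zero_less_divide_iff) (use less_asym in blast)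
    have "(\<Sum>x\<in>UNIV. A x * p (P x / A x)) \<le> (\<Sum>x\<in>UNIV. A x * (c * (P x / A x - 1)\<^sup>2))"
      using near \<rho>(3) A by (intro sum_mono mult_left_mono) (auto simp: less_imp_le)
    also have "\<dots> = c * Sdev A P" by (simp add: Sdev_def sum_distrib_left algebra_simps)
    finally show "d A P \<le> ereal (c * Sdev A P)" using rel P Ppos by simp
  qed
  then show "\<exists>\<rho>>0. \<forall>P\<in>pdists. (\<forall>x. \<bar>P x / A x - 1\<bar> \<le> \<rho>) \<longrightarrow> d A P \<le> ereal (c * Sdev A P)"
    using \<rho>(1) by blast
qed

lemma Lo_from_profile:
  fixes A :: "'a::finite \<Rightarrow> real" and p p' :: "real \<Rightarrow> real"
  assumes A: "\<forall>x. 0 < A x"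
    and der: "\<And>t. 0 < t \<Longrightarrow> (p has_real_derivative p' t) (at t)"
    and p1: "p 1 = 0" and p'1: "p' 1 = 0" and d2: "(p' has_real_derivative a) (at 1)"
    and dn: "\<And>t. 0 < t \<Longrightarrow> t < 1 \<Longrightarrow> p' t \<le> 0"
    and up: "\<And>t. 1 < t \<Longrightarrow> 0 \<le> p' t"
    and rel: "\<forall>P\<in>pdists. (\<forall>x. 0 < P x) \<longrightarrow> d A P = ereal (\<Sum>x\<in>UNIV. A x * p (P x / A x))"
    and zeros: "\<exists>m0>0. \<forall>P\<in>pdists. (\<exists>x. P x = 0) \<longrightarrow> ereal m0 \<le> d A P"
  shows "Lo_prop d A a"
  unfolding Lo_prop_def
proof (intro allI impI)
  fix c assume c: "0 < c \<and> c < a / 2"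
  obtain \<rho> where \<rho>: "\<rho> > 0" "\<rho> < 1" "\<forall>t. \<bar>t - 1\<bar> \<le> \<rho> \<longrightarrow> c * (t - 1)\<^sup>2 \<le> p t"
      "\<forall>t>0. \<rho> \<le> \<bar>t - 1\<bar> \<longrightarrow> c * \<rho>\<^sup>2 \<le> p t"
    using profile[OF der p1 p'1 d2 dn up] c by blast
  obtain m0 where m0: "m0 > 0" "\<forall>P\<in>pdists. (\<exists>x. P x = 0) \<longrightarrow> ereal m0 \<le> d A P"
    using zeros by blast
  define m where "m = c * \<rho>\<^sup>2"
  have m: "0 < m" using c \<rho> by (simp add: m_def)
  define \<kappa> where "\<kappa> = min (m0 / 2) (amin A * m / 2)"
  have \<kappa>: "0 < \<kappa>" using m m0 amin_pos[OF A] by (simp add: \<kappa>_def)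
  have "\<forall>P\<in>pdists. d A P \<le> ereal \<kappa> \<longrightarrow> ereal (c * Sdev A P) \<le> d A P"
  proof (intro ballI impI)
    fix P assume P: "P \<in> pdists" and dP: "d A P \<le> ereal \<kappa>"
    have Ppos: "0 < P x" for x
    proof (rule ccontr)
      assume "\<not> 0 < P x"
      then have "P x = 0" using pdists_nonneg[OF P, of x] by simp
      then have "ereal m0 \<le> d A P" using m0 P by blast
      then have "m0 \<le> \<kappa>" using dP by (meson ereal_less_eq(3) order_trans)
      then show False using m0 by (simp add: \<kappa>_def)
    qed
    have tpos: "0 < P x / A x" for x using Ppos[of x] A by simp
    have dP': "d A P = ereal (\<Sum>x\<in>UNIV. A x * p (P x / A x))" using rel P Ppos by simp
    have "c * (\<Sum>x\<in>UNIV. A x * (P x / A x - 1)\<^sup>2) \<le> (\<Sum>x\<in>UNIV. A x * p (P x / A x))"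
    proof (rule sum_lower[OF A _ _ _ _ m])
      show "\<forall>x. 0 \<le> p (P x / A x)" using profile_nonneg[OF der p1 dn up tpos] by blast
      show "\<forall>x. \<bar>P x / A x - 1\<bar> \<le> \<rho> \<longrightarrow> c * (P x / A x - 1)\<^sup>2 \<le> p (P x / A x)" using \<rho>(3) by blast
      show "\<forall>x. \<rho> \<le> \<bar>P x / A x - 1\<bar> \<longrightarrow> m \<le> p (P x / A x)" using \<rho>(4) tpos by (simp add: m_def)
      have "(\<Sum>x\<in>UNIV. A x * p (P x / A x)) \<le> \<kappa>" using dP dP' by simp
      also have "\<kappa> < amin A * m"
      proof -
        have "0 < amin A * m" using m amin_pos[OF A] by simp
        then show ?thesis unfolding \<kappa>_def by linarith
      qed
      finally show "(\<Sum>x\<in>UNIV. A x * p (P x / A x)) < amin A * m" .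
    qed
    then show "ereal (c * Sdev A P) \<le> d A P" using dP' by (simp add: Sdev_def)
  qed
  then show "\<exists>\<kappa>>0. \<forall>P\<in>pdists. d A P \<le> ereal \<kappa> \<longrightarrow> ereal (c * Sdev A P) \<le> d A P"
    using \<kappa> by blast
qed

lemma KL_props:
  fixes A :: "'a::finite \<Rightarrow> real"
  assumes A: "A \<in> pdists" "\<forall>x. 0 < A x"
  shows "Lo_prop KL A 1" "Up_prop KL A 1"
proof -
  define p where "p t = t - 1 - ln t" for t :: real
  define p' where "p' t = 1 - 1 / t" for t :: real
  have der: "(p has_real_derivative p' t) (at t)" if "0 < t" for t
    unfolding p_def p'_def using that by (auto intro!: derivative_eq_intros simp: field_simps)
  have d2: "(p' has_real_derivative 1) (at 1)"
    unfolding p'_def by (auto intro!: derivative_eq_intros)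
  have p1: "p 1 = 0" and p'1: "p' 1 = 0" by (simp_all add: p_def p'_def)
  have dn: "p' t \<le> 0" if "0 < t" "t < 1" for t using that by (simp add: p'_def field_simps)
  have up: "0 \<le> p' t" if "1 < t" for t using that by (simp add: p'_def field_simps)
  have rel: "\<forall>P\<in>(pdists :: ('a \<Rightarrow> real) set). (\<forall>x. 0 < P x) \<longrightarrow> KL A P = ereal (\<Sum>x\<in>UNIV. A x * p (P x / A x))"
  proof (intro ballI impI)
    fix P :: "'a \<Rightarrow> real" assume P: "P \<in> pdists" and Pp: "\<forall>x. 0 < P x"
    have "A x * p (P x / A x) = P x - A x + A x * ln (A x / P x)" for x
      using A(2)[rule_format, of x] Pp[rule_format, of x] by (simp add: p_def ln_div field_simps)
    then have "(\<Sum>x\<in>UNIV. A x * p (P x / A x)) = (\<Sum>x\<in>UNIV. A x * ln (A x / P x))"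
      by (simp add: sum.distrib sum_subtractf pdists_sum[OF P] pdists_sum[OF A(1)])
    then show "KL A P = ereal (\<Sum>x\<in>UNIV. A x * p (P x / A x))" using KL_fin[OF Pp] by simp
  qed
  have zeros: "\<exists>m0>0. \<forall>P\<in>(pdists :: ('a \<Rightarrow> real) set). (\<exists>x. P x = 0) \<longrightarrow> ereal m0 \<le> KL A P"
    using A(2) by (intro exI[of _ 1]) (auto simp: KL_def)
  show "Lo_prop KL A 1" by (rule Lo_from_profile[where d=KL and A=A and p=p and p'=p', OF A(2) der p1 p'1 d2 dn up rel zeros])
  show "Up_prop KL A 1" by (rule Up_from_profile[where d=KL and A=A and p=p and p'=p', OF A(2) der p1 p'1 d2 rel])
qed

definition rp :: "real \<Rightarrow> real \<Rightarrow> real" where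
  "rp \<alpha> t = (t powr (1 - \<alpha>) - 1 - (1 - \<alpha>) * (t - 1)) / (\<alpha> - 1)"

lemma renyi_s:
  fixes A P :: "'a::finite \<Rightarrow> real"
  assumes A: "A \<in> pdists" "\<forall>x. 0 < A x" and P: "P \<in> pdists" and \<alpha>: "\<alpha> \<noteq> 1"
  shows "(\<Sum>x\<in>UNIV. A x powr \<alpha> * P x powr (1 - \<alpha>)) = 1 + (\<alpha> - 1) * (\<Sum>x\<in>UNIV. A x * rp \<alpha> (P x / A x))"
proof -
  have t1: "A x powr \<alpha> * P x powr (1 - \<alpha>) = A x * (P x / A x) powr (1 - \<alpha>)" for x
  proof (cases "P x = 0")
    case False
    then have p: "0 < P x" using pdists_nonneg[OF P, of x] by simp
    have a: "0 < A x" using A by auto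
    have "A x powr \<alpha> = A x powr 1 / A x powr (1 - \<alpha>)" using powr_diff[of "A x" 1 "1 - \<alpha>"] by simp
    then show ?thesis using a p by (simp add: powr_divide)
  qed simp
  have t2: "A x * (P x / A x) powr (1 - \<alpha>) = (\<alpha> - 1) * (A x * rp \<alpha> (P x / A x)) + A x + (1 - \<alpha>) * (P x - A x)" for x
    using A(2)[rule_format, of x] \<alpha> by (simp add: rp_def field_simps)
  have "(\<Sum>x\<in>UNIV. A x powr \<alpha> * P x powr (1 - \<alpha>))
      = (\<Sum>x\<in>UNIV. (\<alpha> - 1) * (A x * rp \<alpha> (P x / A x)) + A x + (1 - \<alpha>) * (P x - A x))"
    by (simp add: t1 t2)
  also have "\<dots> = (\<alpha> - 1) * (\<Sum>x\<in>UNIV. A x * rp \<alpha> (P x / A x)) + 1"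
    by (simp add: sum.distrib sum_distrib_left[symmetric] sum_subtractf pdists_sum[OF A(1)] pdists_sum[OF P])
  finally show ?thesis by simp
qed

lemma rp_deriv:
  assumes "0 < t" "\<alpha> \<noteq> 1"
  shows "(rp \<alpha> has_real_derivative (1 - t powr (- \<alpha>))) (at t)"
proof -
  have "((\<lambda>t. (t powr (1 - \<alpha>) - 1 - (1 - \<alpha>) * (t - 1)) / (\<alpha> - 1)) has_real_derivative
          (((1 - \<alpha>) * t powr (1 - \<alpha> - 1) - (1 - \<alpha>)) / (\<alpha> - 1))) (at t)"
    using assms by (auto intro!: derivative_eq_intros)
  moreover have "((1 - \<alpha>) * t powr (1 - \<alpha> - 1) - (1 - \<alpha>)) / (\<alpha> - 1) = 1 - t powr (- \<alpha>)"
    using assms by (simp add: field_simps)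
  ultimately show ?thesis unfolding rp_def[abs_def] by simp
qed

lemma rp_deriv2:
  assumes "0 < \<alpha>"
  shows "((\<lambda>t. 1 - t powr (- \<alpha>)) has_real_derivative \<alpha>) (at 1)"
proof -
  have "((\<lambda>t. 1 - t powr (- \<alpha>)) has_real_derivative (0 - (- \<alpha>) * 1 powr (- \<alpha> - 1))) (at 1)"
    by (auto intro!: derivative_eq_intros)
  then show ?thesis by simp
qed

lemma rp_basic:
  assumes "0 < \<alpha>" "\<alpha> \<noteq> 1"
  shows "rp \<alpha> 1 = 0" "1 - (1::real) powr (- \<alpha>) = 0"
    "\<And>t. 0 < t \<Longrightarrow> t < 1 \<Longrightarrow> 1 - t powr (- \<alpha>) \<le> 0"
    "\<And>t. 1 < t \<Longrightarrow> 0 \<le> 1 - t powr (- \<alpha>)"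
    "rp \<alpha> 0 = \<alpha> / (1 - \<alpha>)"
proof -
  show "rp \<alpha> 1 = 0" by (simp add: rp_def)
  show "1 - (1::real) powr (- \<alpha>) = 0" by simp
  show "1 - t powr (- \<alpha>) \<le> 0" if "0 < t" "t < 1" for t
    using powr_less_mono2_neg[of "-\<alpha>" t 1] that assms by simp
  show "0 \<le> 1 - t powr (- \<alpha>)" if "1 < t" for t
    using powr_less_mono2_neg[of "-\<alpha>" 1 t] that assms by simp
  show "rp \<alpha> 0 = \<alpha> / (1 - \<alpha>)" using assms by (simp add: rp_def field_simps)
qed

lemma renyi_eq:
  fixes A P :: "'a::finite \<Rightarrow> real"
  assumes A: "A \<in> pdists" "\<forall>x. 0 < A x" and P: "P \<in> pdists" and \<alpha>: "\<alpha> \<noteq> 1"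
  shows "renyi_div \<alpha> A P = (if 1 < \<alpha> \<and> (\<exists>x. P x = 0) then \<infinity>
           else if 1 + (\<alpha> - 1) * (\<Sum>x\<in>UNIV. A x * rp \<alpha> (P x / A x)) = 0 then \<infinity>
           else ereal (ln (1 + (\<alpha> - 1) * (\<Sum>x\<in>UNIV. A x * rp \<alpha> (P x / A x))) / (\<alpha> - 1)))"
  using renyi_s[OF A P \<alpha>] A(2) \<alpha> unfolding renyi_div_def Let_def by auto

lemma Sdev_le:
  fixes A P :: "'a::finite \<Rightarrow> real"
  assumes A: "A \<in> pdists" "\<forall>x. 0 < A x" and near: "\<forall>x. \<bar>P x / A x - 1\<bar> \<le> \<rho>"
  shows "Sdev A P \<le> \<rho>\<^sup>2"
proof -
  have "Sdev A P \<le> (\<Sum>x\<in>UNIV. A x * \<rho>\<^sup>2)" unfolding Sdev_def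
  proof (intro sum_mono mult_left_mono)
    fix x
    have "\<bar>P x / A x - 1\<bar>\<^sup>2 \<le> \<rho>\<^sup>2" using near by (intro power_mono) auto
    then show "(P x / A x - 1)\<^sup>2 \<le> \<rho>\<^sup>2" by simp
  qed (use A in \<open>auto simp: less_imp_le\<close>)
  also have "\<dots> = \<rho>\<^sup>2" by (simp add: sum_distrib_right[symmetric] pdists_sum[OF A(1)])
  finally show ?thesis .
qed

lemma Sdev_nonneg: "\<forall>x. 0 < A x \<Longrightarrow> 0 \<le> Sdev A P"
  unfolding Sdev_def by (intro sum_nonneg mult_nonneg_nonneg) (auto simp: less_imp_le)

lemma renyi_up:
  fixes A :: "'a::finite \<Rightarrow> real"
  assumes A: "A \<in> pdists" "\<forall>x. 0 < A x" and \<alpha>: "0 < \<alpha>" "\<alpha> \<noteq> 1"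
  shows "Up_prop (renyi_div \<alpha>) A \<alpha>"
  unfolding Up_prop_def
proof (intro allI impI)
  fix c assume c: "\<alpha> / 2 < c"
  note der = rp_deriv[OF _ \<alpha>(2)]
  note d2 = rp_deriv2[OF \<alpha>(1)]
  note b = rp_basic[OF \<alpha>]
  define c1 where "c1 = (\<alpha> / 2 + c) / 2"
  have c1: "\<alpha> / 2 < c1" "c1 < c" "0 < c1" using c \<alpha> by (auto simp: c1_def)
  obtain \<rho>1 where \<rho>1: "\<rho>1 > 0" "\<rho>1 < 1" "\<forall>t. \<bar>t - 1\<bar> \<le> \<rho>1 \<longrightarrow> rp \<alpha> t \<le> c1 * (t - 1)\<^sup>2"
    using quad_upper[where p = "rp \<alpha>", OF der b(1) b(2) d2 c1(1)] by blast
  define \<rho> where "\<rho> = min \<rho>1 (if \<alpha> < 1 then (1 - c1 / c) / ((1 - \<alpha>) * c1) else 1)"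
  have q: "0 < (1 - c1 / c) / ((1 - \<alpha>) * c1)" if "\<alpha> < 1" using c1 that by (simp add: field_simps)
  have \<rho>: "0 < \<rho>" "\<rho> \<le> \<rho>1" "\<rho> < 1" using \<rho>1 q by (auto simp: \<rho>_def)
  have \<rho>2: "(1 - \<alpha>) * c1 * \<rho>\<^sup>2 \<le> 1 - c1 / c" if "\<alpha> < 1"
  proof -
    have "\<rho>\<^sup>2 \<le> \<rho>" using \<rho> by (simp add: power2_eq_square mult_left_le)
    also have "\<rho> \<le> (1 - c1 / c) / ((1 - \<alpha>) * c1)" using that by (simp add: \<rho>_def)
    finally show ?thesis using that c1 by (simp add: field_simps)
  qed
  have "\<forall>P\<in>pdists. (\<forall>x. \<bar>P x / A x - 1\<bar> \<le> \<rho>) \<longrightarrow> renyi_div \<alpha> A P \<le> ereal (c * Sdev A P)"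
  proof (intro ballI impI)
    fix P :: "'a \<Rightarrow> real" assume P: "P \<in> pdists" and near: "\<forall>x. \<bar>P x / A x - 1\<bar> \<le> \<rho>"
    have tpos: "0 < P x / A x" for x using near[rule_format, of x] \<rho> by linarith
    then have Ppos: "0 < P x" for x using A(2)[rule_format, of x] by (simp add: zero_less_divide_iff) (use less_asym in blast)
    define U where "U = (\<Sum>x\<in>UNIV. A x * rp \<alpha> (P x / A x))"
    have U0: "0 \<le> U" unfolding U_def
      using profile_nonneg[where p = "rp \<alpha>", OF der b(1) b(3) b(4) tpos] A(2)
      by (intro sum_nonneg mult_nonneg_nonneg) (auto simp: less_imp_le)
    have "U \<le> (\<Sum>x\<in>UNIV. A x * (c1 * (P x / A x - 1)\<^sup>2))" unfolding U_def
    proof (intro sum_mono mult_left_mono)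
      fix x
      have "\<bar>P x / A x - 1\<bar> \<le> \<rho>1" using near \<rho>(2) by (meson order_trans)
      then show "rp \<alpha> (P x / A x) \<le> c1 * (P x / A x - 1)\<^sup>2" using \<rho>1(3) by blast
    qed (use A(2) in \<open>auto simp: less_imp_le\<close>)
    also have "\<dots> = c1 * Sdev A P" by (simp add: Sdev_def sum_distrib_left algebra_simps)
    finally have Uc1: "U \<le> c1 * Sdev A P" .
    have S0: "0 \<le> Sdev A P" by (rule Sdev_nonneg[OF A(2)])
    have Uc: "U \<le> c * Sdev A P" using Uc1 c1 S0 by (meson le_less_trans less_le_not_le mult_right_mono order_trans)
    have eq: "renyi_div \<alpha> A P = (if 1 + (\<alpha> - 1) * U = 0 then \<infinity> else ereal (ln (1 + (\<alpha> - 1) * U) / (\<alpha> - 1)))"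
      using renyi_eq[OF A P \<alpha>(2)] Ppos unfolding U_def by (auto simp: less_imp_neq[symmetric])
    show "renyi_div \<alpha> A P \<le> ereal (c * Sdev A P)"
    proof (cases "1 < \<alpha>")
      case True
      define s where "s = 1 + (\<alpha> - 1) * U"
      have s1: "1 \<le> s" using True U0 by (simp add: s_def)
      have "ln s \<le> s - 1" using s1 by (intro ln_le_minus_one) simp
      then have "ln s / (\<alpha> - 1) \<le> U" using True by (simp add: s_def divide_le_eq mult.commute)
      then show ?thesis using eq s1 Uc by (simp add: s_def[symmetric])
    next
      case False
      then have a1: "\<alpha> < 1" using \<alpha> by simp
      define s where "s = 1 - (1 - \<alpha>) * U"
      have "(1 - \<alpha>) * U \<le> (1 - \<alpha>) * (c1 * \<rho>\<^sup>2)"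
        using Uc1 Sdev_le[OF A near] c1 a1 by (intro mult_left_mono) (auto intro: order_trans)
      then have "(1 - \<alpha>) * U \<le> 1 - c1 / c" using \<rho>2[OF a1] by (simp add: mult.assoc)
      then have sc: "c1 / c \<le> s" by (simp add: s_def)
      have spos: "0 < s" using sc c1 by (smt (verit) divide_pos_pos)
      have "ln (1 / s) \<le> 1 / s - 1" using spos by (intro ln_le_minus_one) simp
      then have "- ln s \<le> (1 - s) / s" using spos by (simp add: ln_div field_simps)
      also have "(1 - s) / s = (1 - \<alpha>) * U / s" by (simp add: s_def)
      finally have h: "- ln s \<le> (1 - \<alpha>) * (U / s)" by simp
      have "- ln s / (1 - \<alpha>) \<le> U / s" using h a1 by (metis diff_gt_0_iff_gt mult.commute pos_divide_le_eq)
      moreover have "ln s / (\<alpha> - 1) = - ln s / (1 - \<alpha>)"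
        by (metis minus_diff_eq minus_divide_divide)
      ultimately have "ln s / (\<alpha> - 1) \<le> U / s" by simp
      also have "U / s \<le> U / (c1 / c)"
      proof -
        have "0 < c1 / c" using c1 by simp
        then have "0 < s * (c1 / c)" using spos mult_pos_pos by blast
        then show ?thesis using U0 sc by (intro divide_left_mono) auto
      qed
      also have "\<dots> = c / c1 * U" by simp
      also have "\<dots> \<le> c / c1 * (c1 * Sdev A P)" using Uc1 c1 c by (intro mult_left_mono) auto
      also have "\<dots> = c * Sdev A P" using c1 by simp
      finally show ?thesis using eq spos by (simp add: s_def algebra_simps)
    qed
  qed
  then show "\<exists>\<rho>>0. \<forall>P\<in>pdists. (\<forall>x. \<bar>P x / A x - 1\<bar> \<le> \<rho>) \<longrightarrow> renyi_div \<alpha> A P \<le> ereal (c * Sdev A P)"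
    using \<rho>(1) by blast
qed

lemma renyi_lo:
  fixes A :: "'a::finite \<Rightarrow> real"
  assumes A: "A \<in> pdists" "\<forall>x. 0 < A x" and \<alpha>: "0 < \<alpha>" "\<alpha> \<noteq> 1"
  shows "Lo_prop (renyi_div \<alpha>) A \<alpha>"
  unfolding Lo_prop_def
proof (intro allI impI)
  fix c assume c: "0 < c \<and> c < \<alpha> / 2"
  note der = rp_deriv[OF _ \<alpha>(2)]
  note d2 = rp_deriv2[OF \<alpha>(1)]
  note b = rp_basic[OF \<alpha>]
  have am: "0 < amin A" by (rule amin_pos[OF A(2)])
  define U where "U P = (\<Sum>x\<in>UNIV. A x * rp \<alpha> (P x / A x))" for P :: "'a \<Rightarrow> real"
  have s_nonneg: "0 \<le> 1 + (\<alpha> - 1) * U P" if "P \<in> pdists" for P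
    using renyi_s[OF A that \<alpha>(2)] unfolding U_def[symmetric]
    by (metis (no_types, lifting) mult_nonneg_nonneg powr_ge_zero sum_nonneg)
  show "\<exists>\<kappa>>0. \<forall>P\<in>pdists. renyi_div \<alpha> A P \<le> ereal \<kappa> \<longrightarrow> ereal (c * Sdev A P) \<le> renyi_div \<alpha> A P"
  proof (cases "1 < \<alpha>")
    case True
    define c1 where "c1 = (c + \<alpha> / 2) / 2"
    have c1: "c < c1" "c1 < \<alpha> / 2" "0 < c1" using c by (auto simp: c1_def)
    obtain \<rho> where \<rho>: "\<rho> > 0" "\<rho> < 1" "\<forall>t. \<bar>t - 1\<bar> \<le> \<rho> \<longrightarrow> c1 * (t - 1)\<^sup>2 \<le> rp \<alpha> t"
        "\<forall>t>0. \<rho> \<le> \<bar>t - 1\<bar> \<longrightarrow> c1 * \<rho>\<^sup>2 \<le> rp \<alpha> t"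
      using profile[where p = "rp \<alpha>", OF der b(1) b(2) d2 b(3) b(4) c1(2)] by blast
    define m where "m = c1 * \<rho>\<^sup>2"
    have m: "0 < m" using c1 \<rho> by (simp add: m_def)
    define u0 where "u0 = (c1 / c - 1) / (\<alpha> - 1)"
    have u0: "0 < u0" using c c1 True by (simp add: u0_def field_simps)
    define u1 where "u1 = min u0 (amin A * m / 2)"
    have amm: "0 < amin A * m" using am m by simp
    have u1: "0 < u1" "u1 \<le> u0" "u1 < amin A * m" using u0 amm unfolding u1_def by auto
    define \<kappa> where "\<kappa> = ln (1 + (\<alpha> - 1) * u1) / (\<alpha> - 1)"
    have "0 < (\<alpha> - 1) * u1" using u1 True by simp
    then have "0 < ln (1 + (\<alpha> - 1) * u1)" by simp
    then have \<kappa>: "0 < \<kappa>" using True unfolding \<kappa>_def by simp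
    have "\<forall>P\<in>pdists. renyi_div \<alpha> A P \<le> ereal \<kappa> \<longrightarrow> ereal (c * Sdev A P) \<le> renyi_div \<alpha> A P"
    proof (intro ballI impI)
      fix P :: "'a \<Rightarrow> real" assume P: "P \<in> pdists" and dP: "renyi_div \<alpha> A P \<le> ereal \<kappa>"
      note eq = renyi_eq[OF A P \<alpha>(2)]
      have Ppos: "0 < P x" for x
      proof (rule ccontr)
        assume "\<not> 0 < P x"
        then have "P x = 0" using pdists_nonneg[OF P, of x] by simp
        then have "renyi_div \<alpha> A P = \<infinity>" using eq True by auto
        then show False using dP by simp
      qed
      have tpos: "0 < P x / A x" for x using Ppos[of x] A(2) by simp
      define s where "s = 1 + (\<alpha> - 1) * U P"
      have sn0: "s \<noteq> 0" using dP eq True Ppos unfolding s_def U_def by (auto split: if_splits)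
      have spos: "0 < s" using s_nonneg[OF P] sn0 unfolding s_def by linarith
      have D: "renyi_div \<alpha> A P = ereal (ln s / (\<alpha> - 1))"
        using eq True Ppos sn0 unfolding s_def U_def by (auto simp: less_imp_neq[symmetric])
      have "ln s / (\<alpha> - 1) \<le> \<kappa>" using dP D by simp
      then have "ln s \<le> ln (1 + (\<alpha> - 1) * u1)" using True by (simp add: \<kappa>_def divide_le_cancel)
      moreover have "0 < 1 + (\<alpha> - 1) * u1" using \<open>0 < (\<alpha> - 1) * u1\<close> by simp
      ultimately have "s \<le> 1 + (\<alpha> - 1) * u1" using spos by (subst (asm) ln_le_cancel_iff) auto
      then have Uu1: "U P \<le> u1" using True by (simp add: s_def)
      have U0: "0 \<le> U P" unfolding U_def
        using profile_nonneg[where p = "rp \<alpha>", OF der b(1) b(3) b(4) tpos] A(2)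
        by (intro sum_nonneg mult_nonneg_nonneg) (auto simp: less_imp_le)
      have cS: "c1 * Sdev A P \<le> U P" unfolding Sdev_def U_def
      proof (rule sum_lower[OF A(2) _ _ _ _ m])
        show "\<forall>x. 0 \<le> rp \<alpha> (P x / A x)" using profile_nonneg[where p = "rp \<alpha>", OF der b(1) b(3) b(4) tpos] by blast
        show "\<forall>x. \<bar>P x / A x - 1\<bar> \<le> \<rho> \<longrightarrow> c1 * (P x / A x - 1)\<^sup>2 \<le> rp \<alpha> (P x / A x)" using \<rho>(3) by blast
        show "\<forall>x. \<rho> \<le> \<bar>P x / A x - 1\<bar> \<longrightarrow> m \<le> rp \<alpha> (P x / A x)" using \<rho>(4) tpos by (simp add: m_def)
        show "(\<Sum>x\<in>UNIV. A x * rp \<alpha> (P x / A x)) < amin A * m" using Uu1 u1 unfolding U_def by linarith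
      qed
      have "ln (1 / s) \<le> 1 / s - 1" using spos by (intro ln_le_minus_one) simp
      then have "(s - 1) / s \<le> ln s" using spos by (simp add: ln_div field_simps)
      then have "(\<alpha> - 1) * (U P / s) \<le> ln s" by (simp add: s_def)
      then have L: "U P / s \<le> ln s / (\<alpha> - 1)" using True by (simp add: le_divide_eq mult.commute)
      have "(\<alpha> - 1) * u1 \<le> (\<alpha> - 1) * u0" using u1 True by (intro mult_left_mono) auto
      also have "(\<alpha> - 1) * u0 = c1 / c - 1" using True by (simp add: u0_def)
      finally have "s \<le> c1 / c" using \<open>s \<le> 1 + (\<alpha> - 1) * u1\<close> by linarith
      moreover have "0 < c1 / c * s" using c c1 spos by simp
      ultimately have "U P / (c1 / c) \<le> U P / s" using U0 by (intro divide_left_mono) auto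
      moreover have "U P / (c1 / c) = c / c1 * U P" by simp
      moreover have "c / c1 * (c1 * Sdev A P) \<le> c / c1 * U P" using cS c c1 by (intro mult_left_mono) auto
      moreover have "c / c1 * (c1 * Sdev A P) = c * Sdev A P" using c1 by simp
      ultimately have "c * Sdev A P \<le> ln s / (\<alpha> - 1)" using L by linarith
      then show "ereal (c * Sdev A P) \<le> renyi_div \<alpha> A P" using D by simp
    qed
    then show ?thesis using \<kappa> by blast
  next
    case False
    then have a1: "\<alpha> < 1" using \<alpha> by simp
    obtain \<rho> where \<rho>: "\<rho> > 0" "\<rho> < 1" "\<forall>t. \<bar>t - 1\<bar> \<le> \<rho> \<longrightarrow> c * (t - 1)\<^sup>2 \<le> rp \<alpha> t"
        "\<forall>t>0. \<rho> \<le> \<bar>t - 1\<bar> \<longrightarrow> c * \<rho>\<^sup>2 \<le> rp \<alpha> t"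
      using profile[where p = "rp \<alpha>", OF der b(1) b(2) d2 b(3) b(4)] c by blast
    define m where "m = min (c * \<rho>\<^sup>2) (\<alpha> / (1 - \<alpha>))"
    have m: "0 < m" using c \<rho> \<alpha> a1 by (simp add: m_def)
    define \<kappa> where "\<kappa> = amin A * m / 2"
    have amm: "0 < amin A * m" using am m by simp
    have \<kappa>: "0 < \<kappa>" "\<kappa> < amin A * m" using amm unfolding \<kappa>_def by linarith+
    have "\<forall>P\<in>pdists. renyi_div \<alpha> A P \<le> ereal \<kappa> \<longrightarrow> ereal (c * Sdev A P) \<le> renyi_div \<alpha> A P"
    proof (intro ballI impI)
      fix P :: "'a \<Rightarrow> real" assume P: "P \<in> pdists" and dP: "renyi_div \<alpha> A P \<le> ereal \<kappa>"
      note eq = renyi_eq[OF A P \<alpha>(2)]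
      define s where "s = 1 + (\<alpha> - 1) * U P"
      have sn0: "s \<noteq> 0" using dP eq a1 unfolding s_def U_def by (auto split: if_splits)
      have spos: "0 < s" using s_nonneg[OF P] sn0 unfolding s_def by linarith
      have D: "renyi_div \<alpha> A P = ereal (ln s / (\<alpha> - 1))"
        using eq a1 sn0 unfolding s_def U_def by auto
      have "ln s \<le> s - 1" using spos by (intro ln_le_minus_one)
      then have "ln s \<le> (\<alpha> - 1) * U P" by (simp add: s_def)
      then have UD: "U P \<le> ln s / (\<alpha> - 1)" using a1 by (simp add: le_divide_eq mult.commute)
      have tnn: "0 \<le> P x / A x" for x using pdists_nonneg[OF P, of x] A(2)[rule_format, of x] by simp
      have v0: "0 \<le> rp \<alpha> (P x / A x)" for x
      proof (cases "P x = 0")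
        case True then show ?thesis using b(5) \<alpha> a1 by simp
      next
        case False
        then have "0 < P x / A x" using tnn[of x] A(2)[rule_format, of x] by (simp add: order_le_less)
        then show ?thesis using profile_nonneg[where p = "rp \<alpha>", OF der b(1) b(3) b(4)] by blast
      qed
      have cS: "c * Sdev A P \<le> U P" unfolding Sdev_def U_def
      proof (rule sum_lower[OF A(2) _ _ _ _ m])
        show "\<forall>x. 0 \<le> rp \<alpha> (P x / A x)" using v0 by blast
        show "\<forall>x. \<bar>P x / A x - 1\<bar> \<le> \<rho> \<longrightarrow> c * (P x / A x - 1)\<^sup>2 \<le> rp \<alpha> (P x / A x)" using \<rho>(3) by blast
        show "\<forall>x. \<rho> \<le> \<bar>P x / A x - 1\<bar> \<longrightarrow> m \<le> rp \<alpha> (P x / A x)"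
        proof (intro allI impI)
          fix x assume "\<rho> \<le> \<bar>P x / A x - 1\<bar>"
          show "m \<le> rp \<alpha> (P x / A x)"
          proof (cases "P x = 0")
            case True then show ?thesis using b(5) by (simp add: m_def)
          next
            case False
            then have "0 < P x / A x" using tnn[of x] A(2)[rule_format, of x] by (simp add: order_le_less)
            then show ?thesis using \<rho>(4) \<open>\<rho> \<le> _\<close> by (smt (verit) m_def)
          qed
        qed
        have "U P \<le> \<kappa>" using UD dP D by simp
        then show "(\<Sum>x\<in>UNIV. A x * rp \<alpha> (P x / A x)) < amin A * m" using \<kappa> unfolding U_def by linarith
      qed
      show "ereal (c * Sdev A P) \<le> renyi_div \<alpha> A P" using cS UD D by simp
    qed
    then show ?thesis using \<kappa> by blast
  qed
qed

locale fdiv_ctx =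
  fixes f f' f'' :: "real \<Rightarrow> real"
  assumes cvx: "convex_on {0..} f" and f1: "f 1 = 0"
    and fd: "\<And>t. 0 < t \<Longrightarrow> (f has_real_derivative f' t) (at t)"
    and fd2: "\<And>t. 0 < t \<Longrightarrow> (f' has_real_derivative f'' t) (at t)"
begin

lemma tangent:
  assumes s: "0 < s" and y: "0 \<le> y"
  shows "f s + f' s * (y - s) \<le> f y"
proof -
  have "f y - f s \<ge> f' s * (y - s)"
  proof (rule convex_on_imp_above_tangent[OF cvx])
    show "connected {0::real..}" by (simp add: is_interval_connected)
    show "s \<in> interior {0..}" using s by simp
    show "y \<in> {0..}" using y by simp
    show "(f has_field_derivative f' s) (at s within {0..})" using fd[OF s] by (rule has_field_derivative_at_within)
  qed
  then show ?thesis by simp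
qed

lemma f'_mono:
  assumes "0 < s" "s \<le> u"
  shows "f' s \<le> f' u"
proof -
  have "f s + f' s * (u - s) \<le> f u" using tangent[of s u] assms by simp
  moreover have "f u + f' u * (s - u) \<le> f s" using tangent[of u s] assms by simp
  ultimately have "(f' u - f' s) * (u - s) \<ge> 0" by (simp add: algebra_simps)
  then show ?thesis using assms by (cases "s = u") (auto simp: zero_le_mult_iff)
qed

definition psi :: "real \<Rightarrow> real" where
  "psi t = t * f (1 / t) + f' 1 * (t - 1)"

definition psi' :: "real \<Rightarrow> real" where
  "psi' t = f (1 / t) - f' (1 / t) / t + f' 1"

lemma inv_deriv: "0 < t \<Longrightarrow> ((\<lambda>t::real. 1 / t) has_real_derivative - 1 / t\<^sup>2) (at t)"
  by (auto intro!: derivative_eq_intros simp: power2_eq_square field_simps)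

lemma f_inv_deriv:
  assumes "0 < t"
  shows "((\<lambda>t. f (1 / t)) has_real_derivative f' (1 / t) * (- 1 / t\<^sup>2)) (at t)"
  using DERIV_chain2[OF fd inv_deriv[OF assms]] assms by simp

lemma f'_inv_deriv:
  assumes "0 < t"
  shows "((\<lambda>t. f' (1 / t)) has_real_derivative f'' (1 / t) * (- 1 / t\<^sup>2)) (at t)"
  using DERIV_chain2[OF fd2 inv_deriv[OF assms]] assms by simp

lemma psi_deriv:
  assumes "0 < t"
  shows "(psi has_real_derivative psi' t) (at t)"
proof -
  have h1: "((\<lambda>z. z * f (1 / z)) has_real_derivative 1 * f (1 / t) + f' (1 / t) * (- 1 / t\<^sup>2) * t) (at t)"
    by (rule DERIV_mult[OF DERIV_ident f_inv_deriv[OF assms]])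
  have h2: "((\<lambda>z. f' 1 * (z - 1)) has_real_derivative f' 1) (at t)"
    by (auto intro!: derivative_eq_intros)
  have "((\<lambda>t. t * f (1 / t) + f' 1 * (t - 1)) has_real_derivative
          (1 * f (1 / t) + f' (1 / t) * (- 1 / t\<^sup>2) * t + f' 1)) (at t)"
    by (rule DERIV_add[OF h1 h2])
  moreover have "1 * f (1 / t) + f' (1 / t) * (- 1 / t\<^sup>2) * t + f' 1 = psi' t"
    using assms by (simp add: psi'_def power2_eq_square field_simps)
  ultimately show ?thesis unfolding psi_def[abs_def] by simp
qed

lemma psi'_deriv1: "(psi' has_real_derivative f'' 1) (at 1)"
proof -
  have "((\<lambda>t. f (1 / t) - f' (1 / t) / t + f' 1) has_real_derivative
          (f' (1 / 1) * (- 1 / 1\<^sup>2) - ((f'' (1 / 1) * (- 1 / 1\<^sup>2)) * 1 - f' (1 / 1) * 1) / (1 * 1) + 0)) (at 1)"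
    by (intro derivative_intros f_inv_deriv f'_inv_deriv) auto
  then show ?thesis unfolding psi'_def[abs_def] by simp
qed

lemma psi_basic: "psi 1 = 0" "psi' 1 = 0"
  by (simp_all add: psi_def psi'_def f1)

lemma psi'_dn:
  assumes "0 < t" "t < 1"
  shows "psi' t \<le> 0"
proof -
  define s where "s = 1 / t"
  have s: "1 < s" using assms by (simp add: s_def)
  have "f s + f' s * (1 - s) \<le> f 1" using tangent[of s 1] s by simp
  then have a: "f s - s * f' s \<le> - f' s" using f1 by (simp add: algebra_simps)
  have b: "f' 1 \<le> f' s" using f'_mono[of 1 s] s by simp
  have "psi' t = f s - s * f' s + f' 1" using assms by (simp add: psi'_def s_def)
  then show ?thesis using a b by linarith
qed

lemma psi'_up:
  assumes "1 < t"
  shows "0 \<le> psi' t"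
proof -
  define s where "s = 1 / t"
  have s: "0 < s" "s < 1" using assms by (auto simp: s_def)
  have "f 1 + f' 1 * (s - 1) \<le> f s" using tangent[of 1 s] s by simp
  then have a: "f' 1 * (s - 1) \<le> f s" using f1 by simp
  have b: "f' s \<le> f' 1" using f'_mono[of s 1] s by simp
  have "psi' t = f s - s * f' s + f' 1" using assms by (simp add: psi'_def s_def)
  moreover have "0 \<le> s * (f' 1 - f' s)" using s b by simp
  ultimately show ?thesis using a by (simp add: algebra_simps)
qed


lemma slope_mono:
  assumes "0 < u" "u \<le> v"
  shows "(f u - f 0) / u \<le> (f v - f 0) / v"
proof -
  define w where "w = u / v"
  have w: "0 \<le> w" "w \<le> 1" using assms by (auto simp: w_def)
  have "f ((1 - w) *\<^sub>R 0 + w *\<^sub>R v) \<le> (1 - w) * f 0 + w * f v"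
    by (rule convex_onD[OF cvx w]) (use assms in auto)
  moreover have "(1 - w) *\<^sub>R 0 + w *\<^sub>R v = u" using assms by (simp add: w_def)
  ultimately have "f u - f 0 \<le> w * (f v - f 0)" by (simp add: algebra_simps)
  then show ?thesis using assms by (simp add: w_def field_simps)
qed

lemma lim_exists: "\<exists>L. ((\<lambda>t. ereal (f t / t)) \<longlongrightarrow> L) at_top"
proof -
  define q where "q u = (f u - f 0) / u" for u
  define S where "S = (SUP u\<in>{0<..}. ereal (q u))"
  have qS: "((\<lambda>u. ereal (q u)) \<longlongrightarrow> S) at_top"
  proof (rule increasing_tendsto)
    show "eventually (\<lambda>u. ereal (q u) \<le> S) at_top"
      using eventually_gt_at_top[of 0] by eventually_elim (auto simp: S_def intro: SUP_upper)
  next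
    fix x assume "x < S"
    then obtain u0 where u0: "u0 > 0" "x < ereal (q u0)" unfolding S_def by (auto simp: less_SUP_iff)
    show "eventually (\<lambda>u. x < ereal (q u)) at_top"
      using eventually_ge_at_top[of u0]
    proof eventually_elim
      case (elim u)
      then have "q u0 \<le> q u" using u0 slope_mono[of u0 u] by (simp add: q_def)
      then show ?case using u0 by (meson ereal_less_eq(3) less_le_trans)
    qed
  qed
  have S1: "S \<noteq> - \<infinity>"
  proof -
    have "ereal (q 1) \<le> S" unfolding S_def by (rule SUP_upper) auto
    then show ?thesis by auto
  qed
  have z: "((\<lambda>u. ereal (f 0 / u)) \<longlongrightarrow> ereal 0) at_top"
    by (intro tendsto_ereal tendsto_divide_0[OF tendsto_const] filterlim_at_top_imp_at_infinity filterlim_ident)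
  have "((\<lambda>u. ereal (q u) + ereal (f 0 / u)) \<longlongrightarrow> S + ereal 0) at_top"
    by (rule tendsto_add_ereal_nonneg[OF S1 _ qS z]) simp
  moreover have "eventually (\<lambda>u. ereal (q u) + ereal (f 0 / u) = ereal (f u / u)) at_top"
    using eventually_gt_at_top[of 0] by eventually_elim (simp add: q_def field_simps)
  ultimately have "((\<lambda>t. ereal (f t / t)) \<longlongrightarrow> S + ereal 0) at_top"
    by (rule Lim_transform_eventually)
  then show ?thesis by blast
qed


lemma fdiv_rel:
  fixes A P :: "'a::finite \<Rightarrow> real"
  assumes A: "A \<in> pdists" "\<forall>x. 0 < A x" and P: "P \<in> pdists" and Pp: "\<forall>x. 0 < P x"
  shows "f_div f A P = ereal (\<Sum>x\<in>UNIV. A x * psi (P x / A x))"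
proof -
  have "f_div f A P = (\<Sum>x\<in>UNIV. ereal (P x * f (A x / P x)))"
    unfolding f_div_def using Pp by (intro sum.cong) (auto simp: less_imp_neq[symmetric])
  also have "\<dots> = ereal (\<Sum>x\<in>UNIV. P x * f (A x / P x))" by (rule sum_ereal)
  also have "(\<Sum>x\<in>UNIV. P x * f (A x / P x)) = (\<Sum>x\<in>UNIV. A x * psi (P x / A x))"
  proof -
    have "A x * psi (P x / A x) = P x * f (A x / P x) + f' 1 * (P x - A x)" for x
      using A(2)[rule_format, of x] Pp[rule_format, of x] by (simp add: psi_def field_simps)
    then show ?thesis
      by (simp add: sum.distrib sum_distrib_left[symmetric] sum_subtractf pdists_sum[OF A(1)] pdists_sum[OF P])
  qed
  finally show ?thesis .
qed

lemma fdiv_zeros: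
  fixes A :: "'a::finite \<Rightarrow> real"
  assumes A: "A \<in> pdists" "\<forall>x. 0 < A x" and \<alpha>: "0 < f'' 1"
  shows "\<exists>m0>0. \<forall>P\<in>pdists. (\<exists>x. P x = 0) \<longrightarrow> ereal m0 \<le> f_div f A P"
proof -
  define c where "c = f'' 1 / 4"
  have c: "0 < c" "c < f'' 1 / 2" using \<alpha> by (auto simp: c_def)
  obtain \<rho> where \<rho>: "\<rho> > 0" "\<rho> < 1" "\<forall>t>0. \<rho> \<le> \<bar>t - 1\<bar> \<longrightarrow> c * \<rho>\<^sup>2 \<le> psi t"
    using profile[where p = psi, OF psi_deriv psi_basic(1) psi_basic(2) psi'_deriv1 psi'_dn psi'_up c(2)]
    by blast
  define m where "m = c * \<rho>\<^sup>2"
  have m: "0 < m" using c \<rho> by (simp add: m_def)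
  obtain L where L: "((\<lambda>t. ereal (f t / t)) \<longlongrightarrow> L) at_top" using lim_exists by blast
  have Lim: "Lim at_top (\<lambda>t. ereal (f t / t)) = L" by (rule tendsto_Lim[OF trivial_limit_at_top_linorder L])
  have ev: "eventually (\<lambda>u. ereal (f' 1 + m / 2) \<le> ereal (f u / u)) at_top"
    using eventually_ge_at_top[of "max (1 / (1 - \<rho>)) (2 * \<bar>f' 1\<bar> / m + 1)"]
  proof eventually_elim
    case (elim u)
    have u1: "1 / (1 - \<rho>) \<le> u" and u2: "2 * \<bar>f' 1\<bar> / m + 1 \<le> u" using elim by auto
    have upos: "0 < u" using u2 m by (smt (verit) divide_nonneg_pos abs_ge_zero)
    have "1 / u \<le> 1 - \<rho>" using u1 \<rho> upos by (simp add: field_simps)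
    then have "\<rho> \<le> \<bar>1 / u - 1\<bar>" by simp
    then have "m \<le> psi (1 / u)" using \<rho>(3) upos by (simp add: m_def)
    also have "psi (1 / u) = f u / u + f' 1 * (1 / u - 1)" by (simp add: psi_def)
    finally have h: "m \<le> f u / u + f' 1 / u - f' 1" by (simp add: algebra_simps)
    have "2 * \<bar>f' 1\<bar> / m \<le> u" using u2 by simp
    then have "2 * \<bar>f' 1\<bar> \<le> u * m" using m by (simp add: divide_le_eq)
    then have "\<bar>f' 1\<bar> / u \<le> m / 2" using upos by (simp add: divide_le_eq mult.commute)
    moreover have "f' 1 / u \<le> \<bar>f' 1\<bar> / u" using upos by (simp add: divide_right_mono)
    ultimately have "f' 1 / u \<le> m / 2" by linarith
    then have "f' 1 + m / 2 \<le> f u / u" using h by linarith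
    then show ?case by simp
  qed
  have Lb: "ereal (f' 1 + m / 2) \<le> L" by (rule tendsto_lowerbound[OF L ev trivial_limit_at_top_linorder])
  define m0 where "m0 = m / 2 * amin A"
  have m0: "0 < m0" using m amin_pos[OF A(2)] by (simp add: m0_def)
  have "\<forall>P\<in>pdists. (\<exists>x. P x = 0) \<longrightarrow> ereal m0 \<le> f_div f A P"
  proof (intro ballI impI)
    fix P :: "'a \<Rightarrow> real" assume P: "P \<in> pdists" and "\<exists>x. P x = 0"
    then obtain x0 where x0: "P x0 = 0" by blast
    define b where "b x = f' 1 * (A x - P x) + (if P x = 0 then m / 2 * A x else 0)" for x
    have tb: "ereal (b x) \<le> (if P x = 0 then (if A x = 0 then 0 else ereal (A x) * Lim at_top (\<lambda>t. ereal (f t / t)))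
               else ereal (P x * f (A x / P x)))" for x
    proof (cases "P x = 0")
      case True
      have a: "0 < A x" using A(2) by auto
      have "ereal (b x) = ereal (A x) * ereal (f' 1 + m / 2)" using True by (simp add: b_def algebra_simps)
      also have "\<dots> \<le> ereal (A x) * L" using Lb a by (intro ereal_mult_left_mono) auto
      finally show ?thesis using True a Lim by simp
    next
      case False
      then have p: "0 < P x" using pdists_nonneg[OF P, of x] by simp
      have "f 1 + f' 1 * (A x / P x - 1) \<le> f (A x / P x)"
        using tangent[of 1 "A x / P x"] p A(2)[rule_format, of x] by simp
      then have "P x * (f' 1 * (A x / P x - 1)) \<le> P x * f (A x / P x)" using p f1 by (simp add: mult_left_mono)
      moreover have "P x * (f' 1 * (A x / P x - 1)) = b x" using p False by (simp add: b_def field_simps)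
      ultimately show ?thesis using False by simp
    qed
    have "ereal (\<Sum>x\<in>UNIV. b x) = (\<Sum>x\<in>UNIV. ereal (b x))" by (rule sum_ereal[symmetric])
    also have "\<dots> \<le> f_div f A P" unfolding f_div_def by (rule sum_mono) (rule tb)
    finally have sb: "ereal (\<Sum>x\<in>UNIV. b x) \<le> f_div f A P" .
    have "(\<Sum>x\<in>UNIV. b x) = f' 1 * ((\<Sum>x\<in>UNIV. A x) - (\<Sum>x\<in>UNIV. P x)) + (\<Sum>x\<in>UNIV. if P x = 0 then m / 2 * A x else 0)"
      by (simp add: b_def sum.distrib sum_distrib_left sum_subtractf algebra_simps)
    also have "\<dots> = (\<Sum>x\<in>UNIV. if P x = 0 then m / 2 * A x else 0)" by (simp add: pdists_sum[OF A(1)] pdists_sum[OF P])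
    finally have bs: "(\<Sum>x\<in>UNIV. b x) = (\<Sum>x\<in>UNIV. if P x = 0 then m / 2 * A x else 0)" .
    have "m / 2 * A x0 \<le> (\<Sum>x\<in>UNIV. if P x = 0 then m / 2 * A x else 0)"
      using member_le_sum[of x0 UNIV "\<lambda>x. if P x = 0 then m / 2 * A x else 0"] x0 m A(2)
      by (simp add: less_imp_le)
    moreover have "m0 \<le> m / 2 * A x0" unfolding m0_def using m amin_le[of A x0] by (simp add: mult_left_mono)
    ultimately have "m0 \<le> (\<Sum>x\<in>UNIV. b x)" using bs by linarith
    then show "ereal m0 \<le> f_div f A P" using sb by (meson ereal_less_eq(3) order_trans)
  qed
  then show ?thesis using m0 by blast
qed

lemma fdiv_props:
  fixes A :: "'a::finite \<Rightarrow> real"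
  assumes A: "A \<in> pdists" "\<forall>x. 0 < A x" and \<alpha>: "0 < f'' 1"
  shows "Lo_prop (f_div f) A (f'' 1)" "Up_prop (f_div f) A (f'' 1)"
proof -
  have rel: "\<forall>P\<in>(pdists :: ('a \<Rightarrow> real) set). (\<forall>x. 0 < P x) \<longrightarrow> f_div f A P = ereal (\<Sum>x\<in>UNIV. A x * psi (P x / A x))"
    using fdiv_rel[OF A] by blast
  show "Lo_prop (f_div f) A (f'' 1)"
    by (rule Lo_from_profile[where d = "f_div f" and A = A and p = psi and p' = psi',
          OF A(2) psi_deriv psi_basic(1) psi_basic(2) psi'_deriv1 psi'_dn psi'_up rel fdiv_zeros[OF A \<alpha>]])
  show "Up_prop (f_div f) A (f'' 1)"
    by (rule Up_from_profile[where d = "f_div f" and A = A and p = psi and p' = psi',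
          OF A(2) psi_deriv psi_basic(1) psi_basic(2) psi'_deriv1 rel])
qed

end

lemma final_i:
  fixes A B :: "'a::finite \<Rightarrow> real" and d :: "('a \<Rightarrow> real) \<Rightarrow> ('a \<Rightarrow> real) \<Rightarrow> ereal"
    and H :: "('a \<Rightarrow> real) set" and \<alpha> \<mu> :: real
  assumes A: "A \<in> pdists" "\<forall>x. 0 < A x" and B: "B \<in> pdists" "\<forall>x. 0 < B x" and \<mu>: "0 \<le> \<mu>"
    and \<alpha>: "0 < \<alpha>" and Lo: "Lo_prop d A \<alpha>" and Up: "Up_prop d A \<alpha>"
    and QsH: "tilt A B \<mu> \<in> H"
    and H: "\<forall>Q\<in>H. Q \<in> pdists \<and> (\<Sum>x\<in>UNIV. tilt A B \<mu> x * ln (B x / A x)) \<le> (\<Sum>x\<in>UNIV. Q x * ln (B x / A x))"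
  shows "\<forall>\<epsilon>>0. eventually (\<lambda>r.
        \<bar>(INF P\<in>div_ball d A r. INF Q\<in>H. KL Q P)
          - ereal (real_of_ereal (KL (tilt A B \<mu>) A)
                   - sqrt (r * (2 / \<alpha> * variance_under A (\<lambda>x. tilt A B \<mu> x / A x))))\<bar>
        \<le> ereal (\<epsilon> * sqrt r)) (at_right 0)"
proof (intro allI impI)
  fix \<epsilon> :: real assume \<epsilon>: "0 < \<epsilon>"
  define Qs where "Qs = tilt A B \<mu>"
  define E where "E = (\<Sum>x\<in>UNIV. Qs x * ln (Qs x / A x))"
  have Qs: "Qs \<in> pdists" "\<forall>x. 0 < Qs x" "Qs \<in> H"
    using tilt_pdist[OF A(2) B(2)] tilt_pos[OF A(2) B(2)] QsH by (auto simp: Qs_def)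
  have KE: "real_of_ereal (KL Qs A) = E" unfolding E_def KL_fin[OF A(2)] by simp
  have LB: "\<forall>Q\<in>H. \<forall>P\<in>pdists. ereal (E + 1 - (\<Sum>x\<in>UNIV. Qs x * P x / A x)) \<le> KL Q P"
    using tilt_LB[OF A(2) B(2) \<mu>] H unfolding E_def Qs_def by blast
  have lo: "eventually (\<lambda>r. ereal (E - sqrt (r * (2 / \<alpha> * variance_under A (\<lambda>x. Qs x / A x))) - \<epsilon> * sqrt r)
            \<le> (INF P\<in>div_ball d A r. INF Q\<in>H. KL Q P)) (at_right 0)"
    by (rule generic_lower[OF A \<alpha> Lo Qs(1) LB \<epsilon>])
  have up: "eventually (\<lambda>r. (INF P\<in>div_ball d A r. INF Q\<in>H. KL Q P)
            \<le> ereal (E - sqrt (r * (2 / \<alpha> * variance_under A (\<lambda>x. Qs x / A x))) + \<epsilon> * sqrt r)) (at_right 0)"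
    by (rule generic_upper[OF A \<alpha> Up Qs E_def \<epsilon>])
  show "eventually (\<lambda>r.
        \<bar>(INF P\<in>div_ball d A r. INF Q\<in>H. KL Q P)
          - ereal (real_of_ereal (KL (tilt A B \<mu>) A)
                   - sqrt (r * (2 / \<alpha> * variance_under A (\<lambda>x. tilt A B \<mu> x / A x))))\<bar>
        \<le> ereal (\<epsilon> * sqrt r)) (at_right 0)"
    using eventually_conj[OF lo up]
  proof eventually_elim
    case (elim r)
    then show ?case unfolding Qs_def[symmetric] KE by (intro ereal_between) auto
  qed
qed

lemma adm_props:
  fixes d :: "('a::finite \<Rightarrow> real) \<Rightarrow> ('a \<Rightarrow> real) \<Rightarrow> ereal"
  assumes adm: "admissible_div d \<alpha>" and A: "A \<in> pdists" "\<forall>x. 0 < A x"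
  shows "0 < \<alpha>" "Lo_prop d A \<alpha>" "Up_prop d A \<alpha>"
proof -
  have "0 < \<alpha> \<and> Lo_prop d A \<alpha> \<and> Up_prop d A \<alpha>"
    using adm unfolding admissible_div_def
  proof (elim disjE exE conjE)
    assume \<alpha>: "0 < \<alpha>" and d: "d = renyi_div \<alpha>"
    show ?thesis
    proof (cases "\<alpha> = 1")
      case True
      then have "d = KL" unfolding d by (auto simp: renyi_div_def fun_eq_iff)
      then show ?thesis using KL_props[OF A] True by simp
    next
      case False
      then show ?thesis using renyi_lo[OF A \<alpha> False] renyi_up[OF A \<alpha> False] \<alpha> d by simp
    qed
  next
    fix f f' f''
    assume cvx: "convex_on {0..} f" and f1: "f 1 = 0"
      and der: "\<forall>t>0. (f has_real_derivative f' t) (at t) \<and> (f' has_real_derivative f'' t) (at t)"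
      and a: "\<alpha> = f'' 1" and \<alpha>: "0 < \<alpha>" and d: "d = f_div f"
    interpret fdiv_ctx f f' f'' using cvx f1 der by unfold_locales auto
    show ?thesis using fdiv_props[OF A] \<alpha> a d by simp
  qed
  then show "0 < \<alpha>" "Lo_prop d A \<alpha>" "Up_prop d A \<alpha>" by auto
qed

lemma sum_ln_swap:
  fixes Q A B :: "'a::finite \<Rightarrow> real"
  assumes "\<forall>x. 0 < A x" "\<forall>x. 0 < B x"
  shows "(\<Sum>x\<in>UNIV. Q x * ln (A x / B x)) = - (\<Sum>x\<in>UNIV. Q x * ln (B x / A x))"
proof -
  have "Q x * ln (A x / B x) = - (Q x * ln (B x / A x))" for x
    using assms[rule_format, of x] by (simp add: ln_div algebra_simps)
  then show ?thesis by (simp add: sum_negf[symmetric])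
qed

theorem theorem3:
  fixes P0h P1h :: "'a::finite \<Rightarrow> real"
    and d :: "('a \<Rightarrow> real) \<Rightarrow> ('a \<Rightarrow> real) \<Rightarrow> ereal"
    and \<alpha> \<gamma> lam :: real
  assumes adm: "admissible_div d \<alpha>"
    and P0h: "P0h \<in> pdists" "\<forall>x. 0 < P0h x"
    and P1h: "P1h \<in> pdists" "\<forall>x. 0 < P1h x"
    and thr: "- KL P0h P1h \<le> ereal \<gamma>" "ereal \<gamma> \<le> KL P1h P0h"
    and lam: "0 \<le> lam" "lam \<le> 1"
      "KL (tilt P0h P1h lam) P0h - KL (tilt P0h P1h lam) P1h = ereal \<gamma>"
  shows
    "\<forall>\<epsilon>>0. eventually (\<lambda>r.
        \<bar>worst_exp0 d P0h P1h \<gamma> r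
          - ereal (real_of_ereal (KL (tilt P0h P1h lam) P0h)
                   - sqrt (r * (2 / \<alpha> * variance_under P0h (\<lambda>x. tilt P0h P1h lam x / P0h x))))\<bar>
        \<le> ereal (\<epsilon> * sqrt r)) (at_right 0)
     \<and> (\<forall>\<epsilon>>0. eventually (\<lambda>r.
        \<bar>worst_exp1 d P0h P1h \<gamma> r
          - ereal (real_of_ereal (KL (tilt P0h P1h lam) P1h)
                   - sqrt (r * (2 / \<alpha> * variance_under P1h (\<lambda>x. tilt P0h P1h lam x / P1h x))))\<bar>
        \<le> ereal (\<epsilon> * sqrt r)) (at_right 0))"
proof -
  define Qs where "Qs = tilt P0h P1h lam"
  have Qs: "Qs \<in> pdists" unfolding Qs_def by (rule tilt_pdist[OF P0h(2) P1h(2)])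
  have g: "ereal (\<Sum>x\<in>UNIV. Qs x * ln (P1h x / P0h x)) = ereal \<gamma>"
    using lam(3) KL_diff[OF Qs P0h(2) P1h(2)] unfolding Qs_def by simp
  then have g': "(\<Sum>x\<in>UNIV. Qs x * ln (P1h x / P0h x)) = \<gamma>" by simp
  have c0: "\<forall>\<epsilon>>0. eventually (\<lambda>r.
        \<bar>worst_exp0 d P0h P1h \<gamma> r
          - ereal (real_of_ereal (KL (tilt P0h P1h lam) P0h)
                   - sqrt (r * (2 / \<alpha> * variance_under P0h (\<lambda>x. tilt P0h P1h lam x / P0h x))))\<bar>
        \<le> ereal (\<epsilon> * sqrt r)) (at_right 0)"
    unfolding worst_exp0_def
  proof (rule final_i[OF P0h P1h lam(1) adm_props[OF adm P0h]])
    show "tilt P0h P1h lam \<in> Qhat0 P0h P1h \<gamma>"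
      using Qs lam(3) unfolding Qs_def Qhat0_def by simp
    show "\<forall>Q\<in>Qhat0 P0h P1h \<gamma>. Q \<in> pdists \<and> (\<Sum>x\<in>UNIV. tilt P0h P1h lam x * ln (P1h x / P0h x))
            \<le> (\<Sum>x\<in>UNIV. Q x * ln (P1h x / P0h x))"
    proof
      fix Q assume Q: "Q \<in> Qhat0 P0h P1h \<gamma>"
      then have Qp: "Q \<in> pdists" and "ereal \<gamma> \<le> KL Q P0h - KL Q P1h" by (auto simp: Qhat0_def)
      then have "\<gamma> \<le> (\<Sum>x\<in>UNIV. Q x * ln (P1h x / P0h x))" using KL_diff[OF Qp P0h(2) P1h(2)] by simp
      then show "Q \<in> pdists \<and> (\<Sum>x\<in>UNIV. tilt P0h P1h lam x * ln (P1h x / P0h x))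
            \<le> (\<Sum>x\<in>UNIV. Q x * ln (P1h x / P0h x))" using Qp g' unfolding Qs_def by simp
    qed
  qed
  have sw: "tilt P0h P1h lam = tilt P1h P0h (1 - lam)" by (rule tilt_swap)
  have lam': "0 \<le> 1 - lam" using lam by simp
  have c1: "\<forall>\<epsilon>>0. eventually (\<lambda>r.
        \<bar>worst_exp1 d P0h P1h \<gamma> r
          - ereal (real_of_ereal (KL (tilt P0h P1h lam) P1h)
                   - sqrt (r * (2 / \<alpha> * variance_under P1h (\<lambda>x. tilt P0h P1h lam x / P1h x))))\<bar>
        \<le> ereal (\<epsilon> * sqrt r)) (at_right 0)"
    unfolding worst_exp1_def sw
  proof (rule final_i[OF P1h P0h lam' adm_props[OF adm P1h]])
    show "tilt P1h P0h (1 - lam) \<in> Qhat1 P0h P1h \<gamma>"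
      using Qs lam(3) unfolding Qs_def Qhat1_def sw by simp
    show "\<forall>Q\<in>Qhat1 P0h P1h \<gamma>. Q \<in> pdists \<and> (\<Sum>x\<in>UNIV. tilt P1h P0h (1 - lam) x * ln (P0h x / P1h x))
            \<le> (\<Sum>x\<in>UNIV. Q x * ln (P0h x / P1h x))"
    proof
      fix Q assume Q: "Q \<in> Qhat1 P0h P1h \<gamma>"
      then have Qp: "Q \<in> pdists" and "KL Q P0h - KL Q P1h \<le> ereal \<gamma>" by (auto simp: Qhat1_def)
      then have "(\<Sum>x\<in>UNIV. Q x * ln (P1h x / P0h x)) \<le> \<gamma>" using KL_diff[OF Qp P0h(2) P1h(2)] by simp
      then show "Q \<in> pdists \<and> (\<Sum>x\<in>UNIV. tilt P1h P0h (1 - lam) x * ln (P0h x / P1h x))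
            \<le> (\<Sum>x\<in>UNIV. Q x * ln (P0h x / P1h x))"
        using Qp g' sum_ln_swap[OF P0h(2) P1h(2)] unfolding Qs_def sw[symmetric] by simp
    qed
  qed
show ?thesis using c0 c1 by blast
qed

end
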